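(* Let $\eta\in(0,1]$, let $\omega(x)=\eta^{-1}$ for $x\in[0,\eta]$ and $\omega(x)=0$ for $x>\eta$, and let $\tilde\omega(x)=1-x$ for $x\in[0,1]$. Let $f,g\in C^3(\mathbb{R}_+)$ satisfy $f'(\rho)<0$, $g'(\rho)>0$, $f(\rho)>0$, $g(\rho)\ge1$ for all $\rho\ge0$, and suppose there is $M\ge0$ with $\sup_{\rho\ge0}\big(\sum_{k=0}^3|f^{(k)}(\rho)|\big)+\sup_{\rho\ge0}\big(\sum_{k=0}^3|g^{(k)}(\rho)|\big)\le M$. Consider $$\frac{\partial\rho}{\partial t}(t,x)+\frac{\partial}{\partial x}\big(\rho(t,x)v(t,x)\big)=0,\quad v(t,x)=f\Big(\int_x^{x+\eta}\omega(s-x)\rho(t,s)\,ds\Big)\,g\Big(\int_{x-1}^{x}\tilde\omega(x-s)\rho(t,s)\,ds\Big),\quad \rho(t,x+1)=\rho(t,x),$$ for $t\ge0$, $x\in\mathbb{R}$, with initial condition $\rho(0,\cdot)=\rho_0$. Let $\rho_0\in W^{2,\infty}(\mathbb{R})\cap\mathrm{Per}(\mathbb{R})$, and set $\rho^*=\int_0^1\rho_0(s)\,ds$, $\rho_{\min}=\min_{x\in[0,1]}\rho_0(x)$, $\rho_{\max}=\max_{x\in[0,1]}\rho_0(x)$, $$F_{\max}=\max\{|f'(s)|:\rho_{\min}\le s\le\min(\eta^{-1}\rho^*,\rho_{\max})\},\quad F_{\min}=\min\{|f'(s)|:\rho_{\min}\le s\le\min(\eta^{-1}\rho^*,\rho_{\max})\},$$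 $$f_{\min}=f(\min(\eta^{-1}\rho^*,\rho_{\max})),\quad g_{\max}=g\big(\tfrac12\min(2\rho^*-\rho_{\min},\rho_{\max})\big),\quad g_{\min}=g\big(\tfrac12\max(2\rho^*-\rho_{\max},\rho_{\min})\big),$$ $$G_{\min}=\min\{g'(s):\max(2\rho^*-\rho_{\max},\rho_{\min})\le2s\le\min(2\rho^*-\rho_{\min},\rho_{\max})\}.$$ Suppose $F_{\max}g_{\max}-F_{\min}g_{\min}<2\eta f_{\min}G_{\min}$. Then there exists a constant $\bar c>0$ such that the unique solution $\rho\in C^1(\mathbb{R}_+\times\mathbb{R})$ of this initial-value problem (with $\rho[t]\in W^{2,\infty}(\mathbb{R})\cap\mathrm{Per}(\mathbb{R})$ for all $t\ge0$) satisfies $$\int_0^1(\rho(t,x)-\rho^* )^2dx\le\frac{\rho_{\max}}{\rho_{\min}}\exp(-\bar ct)\int_0^1(\rho_0(x)-\rho^* )^2dx,\quad t\ge0.$$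
   Context: $\mathbb{R}_+=[0,+\infty)$. $\mathrm{Per}(\mathbb{R})$ denotes the set of continuous, positive functions $\mathbb{R}\to(0,+\infty)$ that are periodic with period $1$. $W^{2,\infty}(\mathbb{R})$ denotes the $C^1$ functions with Lipschitz derivative. For $\rho:\mathbb{R}_+\times\mathbb{R}\to\mathbb{R}$, $\rho[t]$ denotes the function $x\mapsto\rho(t,x)$. *)

theory Defs
  imports "HOL-Analysis.Analysis"
begin

definition C3_nonneg :: "(real \<Rightarrow> real) \<Rightarrow> (real \<Rightarrow> real) \<Rightarrow> (real \<Rightarrow> real) \<Rightarrow> (real \<Rightarrow> real) \<Rightarrow> bool" where
  "C3_nonneg f f1 f2 f3 \<longleftrightarrow>
     (\<forall>x\<ge>0. (f has_real_derivative f1 x) (at x within {0..}) \<and>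
             (f1 has_real_derivative f2 x) (at x within {0..}) \<and>
             (f2 has_real_derivative f3 x) (at x within {0..})) \<and>
     continuous_on {0..} f3"

definition W2inf :: "(real \<Rightarrow> real) \<Rightarrow> bool" where
  "W2inf u \<longleftrightarrow> (\<exists>u'. (\<forall>x. (u has_real_derivative u' x) (at x)) \<and>
                        (\<exists>L. \<forall>x y. \<bar>u' x - u' y\<bar> \<le> L * \<bar>x - y\<bar>))"

definition Per :: "(real \<Rightarrow> real) \<Rightarrow> bool" where
  "Per u \<longleftrightarrow> continuous_on UNIV u \<and> (\<forall>x. u x > 0) \<and> (\<forall>x. u (x + 1) = u x)"

definition C1_halfplane :: "(real \<Rightarrow> real \<Rightarrow> real) \<Rightarrow> bool" where
  "C1_halfplane \<rho> \<longleftrightarrow> (\<exists>\<rho>t \<rho>x.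
     continuous_on ({0..} \<times> UNIV) (\<lambda>(t,x). \<rho>t t x) \<and>
     continuous_on ({0..} \<times> UNIV) (\<lambda>(t,x). \<rho>x t x) \<and>
     (\<forall>t\<ge>0. \<forall>x. ((\<lambda>(s,y). \<rho> s y) has_derivative (\<lambda>(h,k). \<rho>t t x * h + \<rho>x t x * k))
                    (at (t,x) within ({0..} \<times> UNIV))))"

definition omega :: "real \<Rightarrow> real \<Rightarrow> real" where
  "omega \<eta> y = (if 0 \<le> y \<and> y \<le> \<eta> then 1 / \<eta> else 0)"

definition omega_tilde :: "real \<Rightarrow> real" where
  "omega_tilde y = 1 - y"

definition velocity :: "real \<Rightarrow> (real \<Rightarrow> real) \<Rightarrow> (real \<Rightarrow> real) \<Rightarrow> (real \<Rightarrow> real \<Rightarrow> real) \<Rightarrow> real \<Rightarrow> real \<Rightarrow> real" where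
  "velocity \<eta> f g \<rho> t x =
     f (integral {x..x+\<eta>} (\<lambda>s. omega \<eta> (s - x) * \<rho> t s)) *
     g (integral {x-1..x} (\<lambda>s. omega_tilde (x - s) * \<rho> t s))"

definition is_solution :: "real \<Rightarrow> (real \<Rightarrow> real) \<Rightarrow> (real \<Rightarrow> real) \<Rightarrow> (real \<Rightarrow> real) \<Rightarrow> (real \<Rightarrow> real \<Rightarrow> real) \<Rightarrow> bool" where
  "is_solution \<eta> f g \<rho>0 \<rho> \<longleftrightarrow>
     C1_halfplane \<rho> \<and>
     (\<forall>t\<ge>0. W2inf (\<rho> t) \<and> Per (\<rho> t)) \<and>
     (\<forall>t\<ge>0. \<forall>x. \<rho> t (x + 1) = \<rho> t x) \<and>
     \<rho> 0 = \<rho>0 \<and>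
     (\<forall>t\<ge>0. \<forall>x. \<exists>D. ((\<lambda>s. \<rho> s x) has_real_derivative D) (at t within {0..}) \<and>
                     ((\<lambda>y. \<rho> t y * velocity \<eta> f g \<rho> t y) has_real_derivative (- D)) (at x))"

end

theory Submission
  imports Defs
begin

lemma int_window_deriv:
  fixes r :: "real \<Rightarrow> real"
  assumes rc: "continuous_on UNIV r" and h: "h \<ge> 0"
  shows "((\<lambda>y. integral {y..y+h} r) has_real_derivative r (x+h) - r x) (at x)"
proof -
  define a where "a = x - 1"
  define b where "b = x + h + 1"
  define F where "F = (\<lambda>y. integral {a..y} r)"
  have Fd: "(F has_real_derivative r z) (at z)" if "a < z" "z < b" for z
  proof -
    have "(F has_real_derivative r z) (at z within {a..b})"
      unfolding F_def using that
      by (intro integral_has_real_derivative continuous_on_subset[OF rc]) auto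
    moreover have "z \<in> interior {a..b}" using that by auto
    ultimately show ?thesis by (metis at_within_interior)
  qed
  have e1: "(F has_real_derivative r (x+h)) (at (x+h))" by (rule Fd) (use h in \<open>auto simp: a_def b_def\<close>)
  have e2: "((\<lambda>y. y + h) has_real_derivative 1) (at x)" by (auto intro!: derivative_eq_intros)
  have d1: "((\<lambda>y. F (y + h)) has_real_derivative r (x+h)) (at x)"
    using DERIV_chain2[OF e1 e2] by simp
  have d2: "((\<lambda>y. F (y + h) - F y) has_real_derivative r (x+h) - r x) (at x)"
    by (rule DERIV_diff[OF d1 Fd]) (use h in \<open>auto simp: a_def b_def\<close>)
  show ?thesis
  proof (rule has_field_derivative_transform_within_open[OF d2, of "{x - 1<..<x+1}"])
    fix y assume y: "y \<in> {x - 1<..<x+1}"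
    have ri: "r integrable_on {a..y+h}"
      by (intro integrable_continuous_interval continuous_on_subset[OF rc]) auto
    have "integral {a..y} r + integral {y..y+h} r = integral {a..y+h} r"
      by (rule Henstock_Kurzweil_Integration.integral_combine[OF _ _ ri]) (use y h in \<open>auto simp: a_def\<close>)
    then show "F (y + h) - F y = integral {y..y + h} r" by (simp add: F_def)
  qed auto
qed

lemma per_nat:
  fixes r :: "real \<Rightarrow> real"
  assumes "\<forall>x. r (x+1) = r x"
  shows "r (x + real n) = r x" "r (x - real n) = r x"
proof -
  show "r (x + real n) = r x"
  proof (induction n)
    case (Suc n)
    have "r (x + real (Suc n)) = r ((x + real n) + 1)" by (simp add: algebra_simps)
    then show ?case using Suc assms by simp
  qed simp
  show "r (x - real n) = r x"
  proof (induction n)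
    case (Suc n)
    have "r (x - real (Suc n)) = r ((x - real (Suc n)) + 1)" by (metis assms)
    moreover have "(x - real (Suc n)) + 1 = x - real n" by simp
    ultimately show ?case using Suc by simp
  qed simp
qed

lemma per_int:
  fixes r :: "real \<Rightarrow> real"
  assumes "\<forall>x. r (x+1) = r x"
  shows "r (x + real_of_int n) = r x"
proof (cases "n \<ge> 0")
  case True
  then have "x + real_of_int n = x + real (nat n)" by simp
  then show ?thesis using per_nat(1)[OF assms, of x "nat n"] by metis
next
  case False
  then have "x + real_of_int n = x - real (nat (-n))" by simp
  then show ?thesis using per_nat(2)[OF assms, of x "nat (-n)"] by metis
qed

lemma per_frac:
  fixes r :: "real \<Rightarrow> real"
  assumes "\<forall>x. r (x+1) = r x"
  shows "r (x - of_int \<lfloor>x\<rfloor>) = r x" "x - of_int \<lfloor>x\<rfloor> \<in> {0..1}"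
proof -
  have "r (x + of_int (- \<lfloor>x\<rfloor>)) = r x" by (rule per_int[OF assms])
  then show "r (x - of_int \<lfloor>x\<rfloor>) = r x" by simp
  have "of_int \<lfloor>x\<rfloor> \<le> x" "x < of_int \<lfloor>x\<rfloor> + 1"
    by (rule of_int_floor_le) (rule real_of_int_floor_add_one_gt)
  then show "x - of_int \<lfloor>x\<rfloor> \<in> {0..1}" unfolding atLeastAtMost_iff by linarith
qed

lemma per_integral:
  fixes r :: "real \<Rightarrow> real"
  assumes rc: "continuous_on UNIV r" and p: "\<forall>x. r (x+1) = r x"
  shows "integral {a..a+1} r = integral {0..1} r"
proof -
  have "\<forall>x. ((\<lambda>y. integral {y..y+1} r) has_real_derivative 0) (at x)"
  proof
    fix x
    have "r (x+1) - r x = 0" using p by simp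
    with int_window_deriv[OF rc, of 1 x] show "((\<lambda>y. integral {y..y+1} r) has_real_derivative 0) (at x)" by simp
  qed
  from DERIV_isconst_all[OF this, of a 0] show ?thesis by simp
qed

lemma per_integral_shift:
  fixes r :: "real \<Rightarrow> real"
  assumes rc: "continuous_on UNIV r" and p: "\<forall>x. r (x+1) = r x"
  shows "integral {0..1} (\<lambda>x. r (x + c)) = integral {0..1} r"
proof -
  have "integral {c - c..(c+1) - c} (\<lambda>x. r (x + c)) = integral {c..c+1} r"
    by (rule integral_shift_real_ivl)
  then show ?thesis using per_integral[OF rc p, of c] by simp
qed

definition Aw :: "real \<Rightarrow> (real \<Rightarrow> real) \<Rightarrow> real \<Rightarrow> real" where
  "Aw \<eta> r x = integral {x..x+\<eta>} (\<lambda>s. omega \<eta> (s - x) * r s)"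
definition Bw :: "(real \<Rightarrow> real) \<Rightarrow> real \<Rightarrow> real" where
  "Bw r x = integral {x-1..x} (\<lambda>s. omega_tilde (x - s) * r s)"

lemma velocity_eq: "velocity \<eta> f g \<rho> t x = f (Aw \<eta> (\<rho> t) x) * g (Bw (\<rho> t) x)"
  by (simp add: velocity_def Aw_def Bw_def)

lemma cont_int:
  fixes r :: "real \<Rightarrow> real"
  assumes "continuous_on UNIV r"
  shows "r integrable_on {a..b}"
  by (intro integrable_continuous_interval continuous_on_subset[OF assms]) auto

lemma A_eq:
  fixes r :: "real \<Rightarrow> real"
  assumes "0 < \<eta>"
  shows "Aw \<eta> r x = integral {x..x+\<eta>} r / \<eta>"
proof -
  have "Aw \<eta> r x = integral {x..x+\<eta>} (\<lambda>s. (1/\<eta>) * r s)"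
    unfolding Aw_def by (rule integral_cong) (simp add: omega_def)
  also have "\<dots> = integral {x..x+\<eta>} r / \<eta>" by simp
  finally show ?thesis .
qed

lemma A_deriv:
  fixes r :: "real \<Rightarrow> real"
  assumes "0 < \<eta>" "continuous_on UNIV r"
  shows "(Aw \<eta> r has_real_derivative (r (x+\<eta>) - r x) / \<eta>) (at x)"
proof -
  have "Aw \<eta> r = (\<lambda>x. integral {x..x+\<eta>} r / \<eta>)" using A_eq[OF assms(1)] by (intro ext) simp
  moreover have "((\<lambda>x. integral {x..x+\<eta>} r / \<eta>) has_real_derivative (r (x+\<eta>) - r x) / \<eta>) (at x)"
    using int_window_deriv[OF assms(2), of \<eta> x] assms(1) by (auto intro!: derivative_eq_intros)
  ultimately show ?thesis by simp
qed

lemma A_per: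
  fixes r :: "real \<Rightarrow> real"
  assumes "0 < \<eta>" "\<forall>x. r (x+1) = r x"
  shows "Aw \<eta> r (x+1) = Aw \<eta> r x"
proof -
  have "integral {(x+1)-1..(x+1+\<eta>)-1} (\<lambda>s. r (s + 1)) = integral {x+1..x+1+\<eta>} r"
    by (rule integral_shift_real_ivl)
  then have "integral {x+1..x+1+\<eta>} r = integral {x..x+\<eta>} r" using assms(2) by simp
  then show ?thesis using A_eq[OF assms(1)] by (simp add: add.commute add.left_commute)
qed

lemma B_eq:
  fixes r :: "real \<Rightarrow> real"
  assumes "continuous_on UNIV r"
  shows "Bw r x = (1 - x) * integral {x-1..x} r + integral {x-1..x} (\<lambda>s. s * r s)"
proof -
  have i1: "(\<lambda>s. (1 - x) * r s) integrable_on {x-1..x}" by (intro integrable_on_mult_right cont_int[OF assms])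
  have i2: "(\<lambda>s. s * r s) integrable_on {x-1..x}"
    by (intro integrable_continuous_interval continuous_intros continuous_on_subset[OF assms]) auto
  have "Bw r x = integral {x-1..x} (\<lambda>s. (1 - x) * r s + s * r s)"
    unfolding Bw_def omega_tilde_def by (rule integral_cong) (simp add: algebra_simps)
  also have "\<dots> = integral {x-1..x} (\<lambda>s. (1 - x) * r s) + integral {x-1..x} (\<lambda>s. s * r s)"
    by (rule integral_add[OF i1 i2])
  finally show ?thesis by simp
qed

lemma B_deriv:
  fixes r :: "real \<Rightarrow> real"
  assumes rc: "continuous_on UNIV r" and p: "\<forall>x. r (x+1) = r x"
  shows "(Bw r has_real_derivative r x - integral {0..1} r) (at x)"
proof -
  define I where "I = integral {0..1} r"
  define Q where "Q = (\<lambda>z. integral {z..z+1} (\<lambda>s. s * r s))"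
  have qc: "continuous_on UNIV (\<lambda>s. s * r s)" by (intro continuous_intros rc)
  have "Bw r y = (1 - y) * I + Q (y - 1)" for y
  proof -
    have "integral {y-1..y} r = I" using per_integral[OF rc p, of "y-1"] by (simp add: I_def)
    then show ?thesis using B_eq[OF rc, of y] by (simp add: Q_def)
  qed
  then have e: "Bw r = (\<lambda>y. (1 - y) * I + Q (y - 1))" by (intro ext)
  have qd: "(Q has_real_derivative (x - 1 + 1) * r (x - 1 + 1) - (x - 1) * r (x - 1)) (at (x - 1))"
    unfolding Q_def using int_window_deriv[OF qc, of 1 "x-1"] by simp
  have rx: "r (x - 1) = r x" using p by (metis diff_add_cancel)
  have qd': "(Q has_real_derivative r x) (at (x - 1))" using qd rx by (simp add: algebra_simps)
  have sd: "((\<lambda>y. y - 1) has_real_derivative 1) (at x)" by (auto intro!: derivative_eq_intros)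
  have "((\<lambda>y. (1 - y) * I + Q (y - 1)) has_real_derivative (-1) * I + r x * 1) (at x)"
    by (intro DERIV_add DERIV_chain2[OF qd' sd]) (auto intro!: derivative_eq_intros)
  then show ?thesis unfolding e I_def by simp
qed

lemma B_per:
  fixes r :: "real \<Rightarrow> real"
  assumes "\<forall>x. r (x+1) = r x"
  shows "Bw r (x+1) = Bw r x"
proof -
  have "integral {(x+1-1)-1..(x+1)-1} (\<lambda>s. omega_tilde (x + 1 - (s+1)) * r (s + 1))
      = integral {x+1-1..x+1} (\<lambda>s. omega_tilde (x + 1 - s) * r s)"
    by (rule integral_shift_real_ivl[where f = "\<lambda>s. omega_tilde (x + 1 - s) * r s"])
  then show ?thesis unfolding Bw_def using assms by simp
qed

lemma int_w_half: "((\<lambda>s. 1 - (x - s)) has_integral 1/2) {x-1..x::real}"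
proof -
  have "((\<lambda>s. 1 - (x - s)) has_integral ((1-x)*x + x^2/2) - ((1-x)*(x-1) + (x-1)^2/2)) {x-1..x}"
    by (rule fundamental_theorem_of_calculus)
       (auto simp: has_real_derivative_iff_has_vector_derivative[symmetric] intro!: derivative_eq_intros)
  moreover have "((1-x)*x + x^2/2) - ((1-x)*(x-1) + (x-1)^2/2) = (1/2::real)"
    by (simp add: power2_eq_square field_simps)
  ultimately show ?thesis by simp
qed

lemma A_bounds:
  fixes r :: "real \<Rightarrow> real"
  assumes eta: "0 < \<eta>" "\<eta> \<le> 1" and rc: "continuous_on UNIV r" and p: "\<forall>x. r (x+1) = r x"
    and lo: "\<forall>y. m \<le> r y" and hi: "\<forall>y. r y \<le> Mx" and m0: "0 \<le> m"
  shows "m \<le> Aw \<eta> r x" "Aw \<eta> r x \<le> Mx" "Aw \<eta> r x \<le> integral {0..1} r / \<eta>"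
proof -
  have ri: "r integrable_on {x..x+\<eta>}" by (rule cont_int[OF rc])
  have "integral {x..x+\<eta>} (\<lambda>_. m) \<le> integral {x..x+\<eta>} r"
    by (rule integral_le[OF _ ri]) (use lo in auto)
  then have "\<eta> * m \<le> integral {x..x+\<eta>} r" using eta by simp
  then show "m \<le> Aw \<eta> r x" unfolding A_eq[OF eta(1)] using eta by (simp add: field_simps)
  have "integral {x..x+\<eta>} r \<le> integral {x..x+\<eta>} (\<lambda>_. Mx)"
    by (rule integral_le[OF ri]) (use hi in auto)
  then have "integral {x..x+\<eta>} r \<le> \<eta> * Mx" using eta by simp
  then show "Aw \<eta> r x \<le> Mx" unfolding A_eq[OF eta(1)] using eta by (simp add: field_simps)
  have "integral {x..x+\<eta>} r + integral {x+\<eta>..x+1} r = integral {x..x+1} r"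
    by (rule Henstock_Kurzweil_Integration.integral_combine[OF _ _ cont_int[OF rc]]) (use eta in auto)
  moreover have "0 \<le> integral {x+\<eta>..x+1} r"
    by (rule integral_nonneg[OF cont_int[OF rc]]) (use lo m0 in \<open>auto intro: order_trans\<close>)
  moreover have "integral {x..x+1} r = integral {0..1} r" by (rule per_integral[OF rc p])
  ultimately have "integral {x..x+\<eta>} r \<le> integral {0..1} r" by linarith
  then show "Aw \<eta> r x \<le> integral {0..1} r / \<eta>" unfolding A_eq[OF eta(1)] using eta
    by (simp add: divide_right_mono)
qed

lemma B_bounds:
  fixes r :: "real \<Rightarrow> real"
  assumes rc: "continuous_on UNIV r" and p: "\<forall>x. r (x+1) = r x"
    and lo: "\<forall>y. m \<le> r y" and hi: "\<forall>y. r y \<le> Mx"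
  shows "m / 2 \<le> Bw r x" "Bw r x \<le> Mx / 2"
        "Bw r x \<le> integral {0..1} r - m / 2" "integral {0..1} r - Mx / 2 \<le> Bw r x"
proof -
  define W where "W = (\<lambda>s. 1 - (x - s))"
  define S where "S = {x-1..x}"
  have W01: "0 \<le> W s" "W s \<le> 1" if "s \<in> S" for s using that by (auto simp: W_def S_def)
  have Wc: "continuous_on UNIV W" unfolding W_def by (intro continuous_intros)
  have Wi: "(W has_integral 1/2) S" unfolding W_def S_def by (rule int_w_half)
  have Vi: "((\<lambda>s. 1 - W s) has_integral 1/2) S"
  proof -
    have "((\<lambda>s. 1::real) has_integral 1) S" using has_integral_const_real[of "1::real" "x-1" x] by (simp add: S_def)
    from has_integral_diff[OF this Wi] show ?thesis by simp
  qed
  have B: "Bw r x = integral S (\<lambda>s. W s * r s)" unfolding Bw_def omega_tilde_def W_def S_def by simp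
  have iWr: "(\<lambda>s. W s * r s) integrable_on S" unfolding S_def
    by (intro integrable_continuous_interval continuous_on_subset[OF continuous_on_mult[OF Wc rc]]) auto
  have iVr: "(\<lambda>s. (1 - W s) * r s) integrable_on S" unfolding S_def
    by (intro integrable_continuous_interval continuous_intros continuous_on_subset[OF Wc] continuous_on_subset[OF rc]) auto
  have Ir: "integral S r = integral {0..1} r"
    using per_integral[OF rc p, of "x-1"] by (simp add: S_def)
  have split: "integral S r = integral S (\<lambda>s. W s * r s) + integral S (\<lambda>s. (1 - W s) * r s)"
  proof -
    have "integral S r = integral S (\<lambda>s. W s * r s + (1 - W s) * r s)" by (simp add: algebra_simps)
    also have "\<dots> = integral S (\<lambda>s. W s * r s) + integral S (\<lambda>s. (1 - W s) * r s)"
      by (rule integral_add[OF iWr iVr])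
    finally show ?thesis .
  qed
  have iWm: "((\<lambda>s. W s * c) has_integral 1/2 * c) S" for c using has_integral_mult_left[OF Wi] by simp
  have iVm: "((\<lambda>s. (1 - W s) * c) has_integral 1/2 * c) S" for c using has_integral_mult_left[OF Vi] by simp
  have "integral S (\<lambda>s. W s * m) \<le> integral S (\<lambda>s. W s * r s)"
    by (rule integral_le[OF has_integral_integrable[OF iWm] iWr])
       (use W01 lo in \<open>auto intro: mult_left_mono\<close>)
  moreover have "integral S (\<lambda>s. W s * m) = 1/2 * m" by (rule integral_unique[OF iWm[of m]])
  ultimately show "m / 2 \<le> Bw r x" using B by linarith
  have "integral S (\<lambda>s. W s * r s) \<le> integral S (\<lambda>s. W s * Mx)"
    by (rule integral_le[OF iWr has_integral_integrable[OF iWm]])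
       (use W01 hi in \<open>auto intro: mult_left_mono\<close>)
  moreover have "integral S (\<lambda>s. W s * Mx) = 1/2 * Mx" by (rule integral_unique[OF iWm[of Mx]])
  ultimately show "Bw r x \<le> Mx / 2" using B by linarith
  have "integral S (\<lambda>s. (1 - W s) * m) \<le> integral S (\<lambda>s. (1 - W s) * r s)"
    by (rule integral_le[OF has_integral_integrable[OF iVm] iVr])
       (use W01 lo in \<open>auto intro: mult_left_mono\<close>)
  moreover have "integral S (\<lambda>s. (1 - W s) * m) = 1/2 * m" by (rule integral_unique[OF iVm[of m]])
  ultimately show "Bw r x \<le> integral {0..1} r - m / 2" using B split Ir by linarith
  have "integral S (\<lambda>s. (1 - W s) * r s) \<le> integral S (\<lambda>s. (1 - W s) * Mx)"
    by (rule integral_le[OF iVr has_integral_integrable[OF iVm]])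
       (use W01 hi in \<open>auto intro: mult_left_mono\<close>)
  moreover have "integral S (\<lambda>s. (1 - W s) * Mx) = 1/2 * Mx" by (rule integral_unique[OF iVm[of Mx]])
  ultimately show "integral {0..1} r - Mx / 2 \<le> Bw r x" using B split Ir by linarith
qed

lemma first_time_principle:
  fixes u ut :: "real \<Rightarrow> real \<Rightarrow> real"
  assumes cont: "continuous_on ({0..} \<times> UNIV) (\<lambda>(t,x). u t x)"
    and per: "\<And>t x. t \<ge> 0 \<Longrightarrow> u t (x+1) = u t x"
    and init: "\<And>x. m \<le> u 0 x"
    and deriv: "\<And>t x. t > 0 \<Longrightarrow> ((\<lambda>s. u s x) has_real_derivative ut t x) (at t)"
    and key: "\<And>t x0. t > 0 \<Longrightarrow> (\<forall>y. u t x0 \<le> u t y) \<Longrightarrow> 0 \<le> ut t x0"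
    and t1: "t1 \<ge> 0"
  shows "m \<le> u t1 x1"
proof (rule ccontr)
  assume "\<not> m \<le> u t1 x1"
  then have lt: "u t1 x1 < m" by simp
  define \<epsilon> where "\<epsilon> = (m - u t1 x1) / (2 * (1 + t1))"
  have \<epsilon>0: "\<epsilon> > 0" using lt t1 by (simp add: \<epsilon>_def)
  have perf: "u t (y - of_int \<lfloor>y\<rfloor>) = u t y" "y - of_int \<lfloor>y\<rfloor> \<in> {0..1}" if "t \<ge> 0" for t y
    using per_frac[of "u t" y] per[OF that] by auto
  define x1' where "x1' = x1 - of_int \<lfloor>x1\<rfloor>"
  have x1': "u t1 x1' = u t1 x1" "x1' \<in> {0..1}" using perf[OF t1] by (auto simp: x1'_def)
  define S where "S = {0..t1} \<times> {0..(1::real)}"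
  define F where "F = (\<lambda>p::real\<times>real. u (fst p) (snd p) + \<epsilon> * (1 + fst p))"
  define K where "K = S \<inter> F -` {..m}"
  have Sc: "compact S" unfolding S_def by (intro compact_Times compact_Icc)
  have Fc: "continuous_on S F"
  proof -
    have "continuous_on S (\<lambda>(t,x). u t x)"
      by (rule continuous_on_subset[OF cont]) (auto simp: S_def)
    then have "continuous_on S (\<lambda>p. u (fst p) (snd p))" by (simp add: case_prod_beta')
    then show ?thesis unfolding F_def by (intro continuous_intros)
  qed
  have Kc: "compact K"
  proof -
    have "closed K" unfolding K_def
      by (rule continuous_closed_preimage[OF Fc compact_imp_closed[OF Sc]]) simp
    moreover have "bounded K" by (rule bounded_subset[OF compact_imp_bounded[OF Sc]]) (auto simp: K_def)
    ultimately show ?thesis by (simp add: compact_eq_bounded_closed)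
  qed
  have "(t1, x1') \<in> K"
  proof -
    have "\<epsilon> * (1 + t1) = (m - u t1 x1) / 2" using t1 by (simp add: \<epsilon>_def field_simps)
    then have "u t1 x1 + \<epsilon> * (1 + t1) = u t1 x1 + (m - u t1 x1) / 2" by (simp only:)
    moreover have "u t1 x1 + (m - u t1 x1) / 2 \<le> m" using lt by (simp add: field_simps)
    ultimately have "u t1 x1 + \<epsilon> * (1 + t1) \<le> m" by linarith
    then show ?thesis using x1' t1 by (auto simp: K_def S_def F_def)
  qed
  then have Kne: "K \<noteq> {}" by auto
  obtain p where pK: "p \<in> K" and pmin: "\<forall>q\<in>K. fst p \<le> fst q"
  proof -
    have "continuous_on K fst" by (intro continuous_intros)
    from continuous_attains_inf[OF Kc Kne this] show ?thesis using that by blast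
  qed
  define T where "T = fst p"
  define x0 where "x0 = snd p"
  have T0: "T \<ge> 0" "T \<le> t1" "x0 \<in> {0..1}" using pK by (auto simp: K_def S_def T_def x0_def)
  have ux0: "u T x0 + \<epsilon> * (1 + T) \<le> m" using pK by (auto simp: K_def F_def T_def x0_def)
  have Tpos: "T > 0"
  proof (rule ccontr)
    assume "\<not> T > 0"
    then have "T = 0" using T0 by simp
    then show False using ux0 init[of x0] \<epsilon>0 by simp
  qed
  have before: "u t y + \<epsilon> * (1 + t) > m" if "0 \<le> t" "t < T" for t y
  proof -
    define y' where "y' = y - of_int \<lfloor>y\<rfloor>"
    have y': "u t y' = u t y" "y' \<in> {0..1}" using perf[OF that(1)] by (auto simp: y'_def)
    have "(t, y') \<notin> K" using pmin that by (auto simp: T_def)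
    then show ?thesis using that T0 y' by (auto simp: K_def S_def F_def)
  qed
  have glob: "m \<le> u T y + \<epsilon> * (1 + T)" for y
  proof -
    have "((\<lambda>s. u s y + \<epsilon> * (1 + s)) \<longlongrightarrow> u T y + \<epsilon> * (1 + T)) (at_left T)"
    proof -
      have "isCont (\<lambda>s. u s y) T" using deriv[OF Tpos] by (rule DERIV_isCont)
      then have "((\<lambda>s. u s y) \<longlongrightarrow> u T y) (at_left T)"
        by (simp add: isCont_def filterlim_at_split)
      then show ?thesis by (intro tendsto_intros)
    qed
    moreover have "eventually (\<lambda>s. m \<le> u s y + \<epsilon> * (1 + s)) (at_left T)"
      using eventually_at_left_real[OF Tpos] by eventually_elim (use before in \<open>fastforce intro: less_imp_le\<close>)
    ultimately show ?thesis by (rule tendsto_lowerbound) simp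
  qed
  have "\<forall>y. u T x0 \<le> u T y"
  proof
    fix y show "u T x0 \<le> u T y" using glob[of y] ux0 by linarith
  qed
  then have ut0: "0 \<le> ut T x0" by (rule key[OF Tpos])
  have hd: "((\<lambda>s. u s x0 + \<epsilon> * s) has_real_derivative ut T x0 + \<epsilon>) (at T)"
    using deriv[OF Tpos] by (auto intro!: derivative_eq_intros)
  obtain d where d: "d > 0" "\<forall>h>0. h < d \<longrightarrow> u (T - h) x0 + \<epsilon> * (T - h) < u T x0 + \<epsilon> * T"
    using DERIV_pos_inc_left[OF hd] ut0 \<epsilon>0 by force
  define h where "h = min d T / 2"
  have h: "h > 0" "h < d" "h < T" using d Tpos by (auto simp: h_def)
  have "u (T - h) x0 + \<epsilon> * (T - h) < u T x0 + \<epsilon> * T" using d h by auto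
  moreover have "u (T - h) x0 + \<epsilon> * (1 + (T - h)) > m" by (rule before) (use h in auto)
  ultimately show False using ux0 by (simp add: algebra_simps)
qed

definition phi :: "real \<Rightarrow> real \<Rightarrow> real" where
  "phi c y = y * ln (y / c) - y + c"

lemma phi_deriv:
  assumes "0 < c" "0 < y"
  shows "(phi c has_real_derivative ln (y / c)) (at y)"
proof -
  have "((\<lambda>y. y * ln (y / c) - y + c) has_real_derivative ln (y / c)) (at y)"
    using assms by (auto intro!: derivative_eq_intros)
  then show ?thesis unfolding phi_def[abs_def] by simp
qed

lemma min_at_c:
  fixes h k k' :: "real \<Rightarrow> real"
  assumes hd: "\<And>s. s > 0 \<Longrightarrow> (h has_real_derivative k s) (at s)"
    and kd: "\<And>s. s > 0 \<Longrightarrow> (k has_real_derivative k' s) (at s)"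
    and kc: "k c = 0" and c: "c > 0" and y: "y > 0"
    and k'nn: "\<And>s. min y c < s \<Longrightarrow> s < max y c \<Longrightarrow> 0 \<le> k' s"
  shows "h c \<le> h y"
proof -
  have hc: "continuous_on {a..b} h" if "a > 0" for a b
  proof (rule DERIV_continuous_on)
    fix x assume "x \<in> {a..b}"
    then have "x > 0" using that by simp
    then have "(h has_real_derivative k x) (at x)" by (rule hd)
    then show "(h has_real_derivative k x) (at x within {a..b})" by (rule has_field_derivative_at_within)
  qed
  have kcont: "continuous_on {a..b} k" if "a > 0" for a b
  proof (rule DERIV_continuous_on)
    fix x assume "x \<in> {a..b}"
    then have "x > 0" using that by simp
    then have "(k has_real_derivative k' x) (at x)" by (rule kd)
    then show "(k has_real_derivative k' x) (at x within {a..b})" by (rule has_field_derivative_at_within)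
  qed
  have kinc: "k a \<le> k b" if "min y c \<le> a" "a \<le> b" "b \<le> max y c" for a b
  proof (rule DERIV_nonneg_imp_increasing_open[OF that(2) _ kcont])
    fix \<tau> assume t: "a < \<tau>" "\<tau> < b"
    then have t2: "\<tau> > 0" "min y c < \<tau>" "\<tau> < max y c" using that c y by auto
    show "\<exists>z. (k has_real_derivative z) (at \<tau>) \<and> 0 \<le> z"
      using kd[OF t2(1)] k'nn[OF t2(2,3)] by blast
  next
    show "a > 0" using that c y by auto
  qed
  show ?thesis
  proof (cases "c \<le> y")
    case True
    show "h c \<le> h y"
    proof (rule DERIV_nonneg_imp_increasing_open[OF True _ hc[OF c]])
      fix s assume s: "c < s" "s < y"
      have "k c \<le> k s" by (rule kinc) (use s True in auto)
      then show "\<exists>z. (h has_real_derivative z) (at s) \<and> 0 \<le> z"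
        using hd[of s] s c kc by auto
    qed
  next
    case False
    then have yc: "y \<le> c" by simp
    show "h c \<le> h y"
    proof (rule DERIV_nonpos_imp_decreasing_open[OF yc _ hc[OF y]])
      fix s assume s: "y < s" "s < c"
      have "k s \<le> k c" by (rule kinc) (use s yc in auto)
      then show "\<exists>z. (h has_real_derivative z) (at s) \<and> z \<le> 0"
        using hd[of s] s y kc by auto
    qed
  qed
qed

lemma phi_lower:
  assumes c: "0 < c" and y: "0 < y" and yb: "y \<le> b" and cb: "c \<le> b"
  shows "(y - c)\<^sup>2 / (2 * b) \<le> phi c y"
proof -
  have b: "b > 0" using c cb by simp
  define h where "h = (\<lambda>s. phi c s - (s - c)\<^sup>2 / (2 * b))"
  define k where "k = (\<lambda>s. ln (s / c) - (s - c) / b)"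
  have hd: "(h has_real_derivative k s) (at s)" if "s > 0" for s
  proof -
    have pd: "(phi c has_real_derivative ln (s / c)) (at s)" by (rule phi_deriv) (use that c in auto)
    have qd: "((\<lambda>s. (s - c)\<^sup>2 / (2 * b)) has_real_derivative (s - c) / b) (at s)"
      using b by (auto intro!: derivative_eq_intros simp: field_simps)
    have "(h has_real_derivative ln (s / c) - (s - c) / b) (at s)"
      unfolding h_def by (rule DERIV_diff[OF pd qd])
    then show ?thesis by (simp add: k_def)
  qed
  have kd: "(k has_real_derivative 1 / s - 1 / b) (at s)" if "s > 0" for s
  proof -
    have "(k has_real_derivative (1 / c) / (s / c) - 1 / b) (at s)"
      unfolding k_def using that c b by (auto intro!: derivative_eq_intros)
    then show ?thesis using c that by simp
  qed
  have "h c \<le> h y"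
  proof (rule min_at_c[OF hd kd _ c y])
    show "k c = 0" using c by (simp add: k_def)
    fix s assume "min y c < s" "s < max y c"
    then have "0 < s" "s \<le> b" using yb cb y c by auto
    then show "0 \<le> 1 / s - 1 / b" by (simp add: frac_le)
  qed auto
  moreover have "h c = 0" using c by (simp add: h_def phi_def)
  ultimately show ?thesis by (simp add: h_def)
qed

lemma phi_upper:
  assumes a: "0 < a" and y: "a \<le> y" and ca: "a \<le> c"
  shows "phi c y \<le> (y - c)\<^sup>2 / (2 * a)"
proof -
  have c: "c > 0" "y > 0" using a ca y by auto
  define h where "h = (\<lambda>s. (s - c)\<^sup>2 / (2 * a) - phi c s)"
  define k where "k = (\<lambda>s. (s - c) / a - ln (s / c))"
  have hd: "(h has_real_derivative k s) (at s)" if "s > 0" for s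
  proof -
    have pd: "(phi c has_real_derivative ln (s / c)) (at s)" by (rule phi_deriv) (use that c in auto)
    have qd: "((\<lambda>s. (s - c)\<^sup>2 / (2 * a)) has_real_derivative (s - c) / a) (at s)"
      using a by (auto intro!: derivative_eq_intros simp: field_simps)
    have "(h has_real_derivative (s - c) / a - ln (s / c)) (at s)"
      unfolding h_def by (rule DERIV_diff[OF qd pd])
    then show ?thesis by (simp add: k_def)
  qed
  have kd: "(k has_real_derivative 1 / a - 1 / s) (at s)" if "s > 0" for s
  proof -
    have "(k has_real_derivative 1 / a - (1 / c) / (s / c)) (at s)"
      unfolding k_def using that c a by (auto intro!: derivative_eq_intros)
    then show ?thesis using c that by simp
  qed
  have "h c \<le> h y"
  proof (rule min_at_c[OF hd kd _ c])
    show "k c = 0" using c by (simp add: k_def)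
    fix s assume "min y c < s" "s < max y c"
    then have "a \<le> s" using y ca by auto
    then show "0 \<le> 1 / a - 1 / s" using a by (simp add: frac_le)
  qed auto
  moreover have "h c = 0" using c by (simp add: h_def phi_def)
  ultimately show ?thesis by (simp add: h_def)
qed

lemma at_interior_real: "(0::real) < t \<Longrightarrow> at t within {0..} = at t"
  by (rule at_within_interior) simp

locale sol =
  fixes \<eta> :: real and f f1 g g1 :: "real \<Rightarrow> real" and \<rho> \<rho>t rd :: "real \<Rightarrow> real \<Rightarrow> real"
  assumes eta: "0 < \<eta>" "\<eta> \<le> 1"
  and fd: "\<And>y. 0 \<le> y \<Longrightarrow> (f has_real_derivative f1 y) (at y within {0..})"
  and gd: "\<And>y. 0 \<le> y \<Longrightarrow> (g has_real_derivative g1 y) (at y within {0..})"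
  and fpos: "\<And>y. 0 \<le> y \<Longrightarrow> 0 < f y" and f1neg: "\<And>y. 0 \<le> y \<Longrightarrow> f1 y < 0"
  and g1pos: "\<And>y. 0 \<le> y \<Longrightarrow> 0 < g1 y" and gge1: "\<And>y. 0 \<le> y \<Longrightarrow> 1 \<le> g y"
  and rcont: "continuous_on ({0..} \<times> UNIV) (\<lambda>(t,x). \<rho> t x)"
  and rtcont: "continuous_on ({0..} \<times> UNIV) (\<lambda>(t,x). \<rho>t t x)"
  and rtd: "\<And>t x. 0 \<le> t \<Longrightarrow> ((\<lambda>s. \<rho> s x) has_real_derivative \<rho>t t x) (at t within {0..})"
  and rdd: "\<And>t x. 0 \<le> t \<Longrightarrow> (\<rho> t has_real_derivative rd t x) (at x)"
  and pos: "\<And>t x. 0 \<le> t \<Longrightarrow> 0 < \<rho> t x"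
  and per: "\<And>t x. 0 \<le> t \<Longrightarrow> \<rho> t (x+1) = \<rho> t x"
  and pde: "\<And>t x. 0 < t \<Longrightarrow> ((\<lambda>y. \<rho> t y * velocity \<eta> f g \<rho> t y) has_real_derivative - \<rho>t t x) (at x)"
begin

definition M where "M t = integral {0..1} (\<rho> t)"
definition A where "A t x = Aw \<eta> (\<rho> t) x"
definition B where "B t x = Bw (\<rho> t) x"
definition vx where "vx t x = f1 (A t x) * ((\<rho> t (x+\<eta>) - \<rho> t x) / \<eta>) * g (B t x)
   + f (A t x) * (g1 (B t x) * (\<rho> t x - M t))"

lemma rc: "0 \<le> t \<Longrightarrow> continuous_on UNIV (\<rho> t)"
proof (rule DERIV_continuous_on)
  fix x assume "0 \<le> t"
  then show "(\<rho> t has_real_derivative rd t x) (at x within UNIV)" using rdd by simp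
qed

lemma perf: "0 \<le> t \<Longrightarrow> \<forall>x. \<rho> t (x+1) = \<rho> t x" using per by blast

lemma bounds_t:
  assumes t: "0 \<le> t"
  obtains m Mx where "0 < m" "\<forall>y. m \<le> \<rho> t y" "\<forall>y. \<rho> t y \<le> Mx"
proof -
  have c: "continuous_on {0..1} (\<rho> t)" by (rule continuous_on_subset[OF rc[OF t]]) auto
  obtain a where a: "a \<in> {0..1}" "\<forall>y\<in>{0..1}. \<rho> t a \<le> \<rho> t y"
    using continuous_attains_inf[OF compact_Icc _ c] by auto
  obtain b where b: "b \<in> {0..1}" "\<forall>y\<in>{0..1}. \<rho> t y \<le> \<rho> t b"
    using continuous_attains_sup[OF compact_Icc _ c] by auto
  have "\<rho> t a \<le> \<rho> t y" "\<rho> t y \<le> \<rho> t b" for y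
    using a(2)[rule_format, OF per_frac(2)[OF perf[OF t], of y]]
          b(2)[rule_format, OF per_frac(2)[OF perf[OF t], of y]]
          per_frac(1)[OF perf[OF t], of y] by auto
  then show ?thesis using that[of "\<rho> t a" "\<rho> t b"] pos[OF t] by blast
qed

lemma AB_pos:
  assumes t: "0 \<le> t"
  shows "0 < A t x" "0 < B t x"
proof -
  obtain m Mx where m: "0 < m" "\<forall>y. m \<le> \<rho> t y" "\<forall>y. \<rho> t y \<le> Mx" using bounds_t[OF t] by blast
  have "m \<le> A t x" using A_bounds(1)[OF eta rc[OF t] perf[OF t] m(2) m(3)] m(1) by (simp add: A_def)
  then show "0 < A t x" using m(1) by linarith
  have "m / 2 \<le> B t x" using B_bounds(1)[OF rc[OF t] perf[OF t] m(2) m(3)] by (simp add: B_def)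
  then show "0 < B t x" using m(1) by linarith
qed

lemma v_eq: "velocity \<eta> f g \<rho> t = (\<lambda>y. f (A t y) * g (B t y))"
  by (intro ext) (simp add: velocity_eq A_def B_def)

lemma v_deriv:
  assumes t: "0 \<le> t"
  shows "(velocity \<eta> f g \<rho> t has_real_derivative vx t x) (at x)"
proof -
  have Ad: "((A t) has_real_derivative (\<rho> t (x+\<eta>) - \<rho> t x) / \<eta>) (at x)"
    unfolding A_def[abs_def] by (rule A_deriv[OF eta(1) rc[OF t]])
  have Bd: "((B t) has_real_derivative \<rho> t x - M t) (at x)"
    unfolding B_def[abs_def] M_def by (rule B_deriv[OF rc[OF t] perf[OF t]])
  have fA: "(f has_real_derivative f1 (A t x)) (at (A t x))"
    using fd[of "A t x"] AB_pos[OF t, of x] at_interior_real[of "A t x"] by simp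
  have gB: "(g has_real_derivative g1 (B t x)) (at (B t x))"
    using gd[of "B t x"] AB_pos[OF t, of x] at_interior_real[of "B t x"] by simp
  have d1: "((\<lambda>y. f (A t y)) has_real_derivative f1 (A t x) * ((\<rho> t (x+\<eta>) - \<rho> t x) / \<eta>)) (at x)"
    by (rule DERIV_chain2[OF fA Ad])
  have d2: "((\<lambda>y. g (B t y)) has_real_derivative g1 (B t x) * (\<rho> t x - M t)) (at x)"
    by (rule DERIV_chain2[OF gB Bd])
  have "((\<lambda>y. f (A t y) * g (B t y)) has_real_derivative
      f1 (A t x) * ((\<rho> t (x+\<eta>) - \<rho> t x) / \<eta>) * g (B t x) + g1 (B t x) * (\<rho> t x - M t) * f (A t x)) (at x)"
    by (rule DERIV_mult[OF d1 d2])
  then show ?thesis unfolding v_eq vx_def by (simp add: algebra_simps)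
qed

lemma pde_eq:
  assumes t: "0 < t"
  shows "\<rho>t t x = - (rd t x * velocity \<eta> f g \<rho> t x + \<rho> t x * vx t x)"
proof -
  have "((\<lambda>y. \<rho> t y * velocity \<eta> f g \<rho> t y) has_real_derivative
      \<rho> t x * vx t x + rd t x * velocity \<eta> f g \<rho> t x) (at x)"
    using t by (intro DERIV_mult' rdd v_deriv) auto
  from DERIV_unique[OF pde[OF t] this] show ?thesis by simp
qed

lemma vel_per:
  assumes t: "0 \<le> t"
  shows "velocity \<eta> f g \<rho> t (x+1) = velocity \<eta> f g \<rho> t x"
  unfolding velocity_eq using A_per[OF eta(1) perf[OF t]] B_per[OF perf[OF t]] by simp

lemma M_deriv:
  assumes t: "0 \<le> t"
  shows "(M has_real_derivative integral {0..1} (\<rho>t t)) (at t within {0..})"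
proof -
  have "((\<lambda>t. integral (cbox 0 1) (\<rho> t)) has_field_derivative integral (cbox 0 1) (\<rho>t t)) (at t within {0..})"
  proof (rule leibniz_rule_field_derivative)
    fix s x assume "s \<in> {0::real..}" "x \<in> cbox (0::real) 1"
    then show "((\<lambda>s. \<rho> s x) has_real_derivative \<rho>t s x) (at s within {0..})" using rtd by simp
  next
    fix s assume "s \<in> {0::real..}"
    then show "\<rho> s integrable_on cbox 0 1" using cont_int[OF rc[of s]] by simp
  next
    show "continuous_on ({0..} \<times> cbox 0 1) (\<lambda>(s, x). \<rho>t s x)"
      by (rule continuous_on_subset[OF rtcont]) auto
  qed (use t in auto)
  then show ?thesis by (simp add: M_def[abs_def])
qed

lemma M_deriv0:
  assumes t: "0 < t"
  shows "integral {0..1} (\<rho>t t) = 0"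
proof -
  define P where "P = (\<lambda>y. \<rho> t y * velocity \<eta> f g \<rho> t y)"
  have "((\<lambda>y. - \<rho>t t y) has_integral P 1 - P 0) {0..1}"
  proof (rule fundamental_theorem_of_calculus)
    fix y :: real
    have "(P has_real_derivative - \<rho>t t y) (at y)" unfolding P_def by (rule pde[OF t])
    then show "(P has_vector_derivative - \<rho>t t y) (at y within {0..1})"
      by (simp add: has_real_derivative_iff_has_vector_derivative[symmetric] has_field_derivative_at_within)
  qed simp
  moreover have "P 1 = P 0" using per[of t 0] vel_per[of t 0] t by (simp add: P_def)
  ultimately have "((\<lambda>y. - \<rho>t t y) has_integral 0) {0..1}" by simp
  then have "(\<rho>t t has_integral 0) {0..1}" using has_integral_neg[of "\<lambda>y. - \<rho>t t y" 0 "{0..1}"] by simp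
  then show ?thesis by (rule integral_unique)
qed

lemma mass:
  assumes t: "0 \<le> t"
  shows "M t = M 0"
proof (cases "t = 0")
  case False
  then have tp: "0 < t" using t by simp
  have cont: "continuous_on {0..t} M"
  proof (rule DERIV_continuous_on)
    fix s assume "s \<in> {0..t}"
    then show "(M has_real_derivative integral {0..1} (\<rho>t s)) (at s within {0..t})"
      by (intro DERIV_subset[OF M_deriv]) auto
  qed
  have d: "(M has_real_derivative 0) (at s)" if "0 < s" for s
    using M_deriv[of s] M_deriv0[OF that] at_interior_real[OF that] that by simp
  have "M 0 \<le> M t" by (rule DERIV_nonneg_imp_increasing_open[OF t _ cont]) (use d in auto)
  moreover have "M t \<le> M 0" by (rule DERIV_nonpos_imp_decreasing_open[OF t _ cont]) (use d in auto)
  ultimately show ?thesis by simp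
qed simp

end

context sol begin

lemma rt_at: "0 < t \<Longrightarrow> ((\<lambda>s. \<rho> s x) has_real_derivative \<rho>t t x) (at t)"
  using rtd[of t x] at_interior_real[of t] by simp

lemma M_ge_min:
  assumes t: "0 \<le> t" and mn: "\<forall>y. \<rho> t x0 \<le> \<rho> t y"
  shows "\<rho> t x0 \<le> M t"
proof -
  have "integral {0..1} (\<lambda>_::real. \<rho> t x0) \<le> integral {0..1} (\<rho> t)"
  proof (rule Henstock_Kurzweil_Integration.integral_le)
    show "\<rho> t integrable_on {0..1}" by (rule cont_int[OF rc[OF t]])
    show "(\<lambda>_::real. \<rho> t x0) integrable_on {0..1}" by (rule integrable_const_ivl)
  qed (use mn in auto)
  then show ?thesis by (simp add: M_def)
qed

lemma M_le_max:
  assumes t: "0 \<le> t" and mx: "\<forall>y. \<rho> t y \<le> \<rho> t x0"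
  shows "M t \<le> \<rho> t x0"
proof -
  have "integral {0..1} (\<rho> t) \<le> integral {0..1} (\<lambda>_::real. \<rho> t x0)"
  proof (rule Henstock_Kurzweil_Integration.integral_le)
    show "\<rho> t integrable_on {0..1}" by (rule cont_int[OF rc[OF t]])
    show "(\<lambda>_::real. \<rho> t x0) integrable_on {0..1}" by (rule integrable_const_ivl)
  qed (use mx in auto)
  then show ?thesis by (simp add: M_def)
qed

lemma key_min:
  assumes t: "0 < t" and mn: "\<forall>y. \<rho> t x0 \<le> \<rho> t y"
  shows "0 \<le> \<rho>t t x0"
proof -
  have t0: "0 \<le> t" using t by simp
  have rd0: "rd t x0 = 0"
    by (rule DERIV_local_min[OF rdd[OF t0], of 1]) (use mn in auto)
  have a: "f1 (A t x0) < 0" "1 \<le> g (B t x0)" "0 < f (A t x0)" "0 < g1 (B t x0)"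
    using f1neg gge1 fpos g1pos AB_pos[OF t0, of x0] by auto
  have ad: "0 \<le> (\<rho> t (x0+\<eta>) - \<rho> t x0) / \<eta>" using mn eta by simp
  have bd: "\<rho> t x0 - M t \<le> 0" using M_ge_min[OF t0 mn] by simp
  have "f1 (A t x0) * ((\<rho> t (x0+\<eta>) - \<rho> t x0) / \<eta>) \<le> 0"
    by (rule mult_nonpos_nonneg[OF less_imp_le[OF a(1)] ad])
  then have v1: "f1 (A t x0) * ((\<rho> t (x0+\<eta>) - \<rho> t x0) / \<eta>) * g (B t x0) \<le> 0"
    by (rule mult_nonpos_nonneg) (use a(2) in linarith)
  have "g1 (B t x0) * (\<rho> t x0 - M t) \<le> 0" using a(4) bd by (simp add: mult_nonneg_nonpos)
  then have v2: "f (A t x0) * (g1 (B t x0) * (\<rho> t x0 - M t)) \<le> 0" using a(3) by (simp add: mult_nonneg_nonpos)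
  have "vx t x0 \<le> 0" using v1 v2 by (simp add: vx_def)
  then have "\<rho> t x0 * vx t x0 \<le> 0" using pos[OF t0, of x0] by (simp add: mult_nonneg_nonpos)
  then show ?thesis using pde_eq[OF t, of x0] rd0 by simp
qed

lemma key_max:
  assumes t: "0 < t" and mx: "\<forall>y. \<rho> t y \<le> \<rho> t x0"
  shows "\<rho>t t x0 \<le> 0"
proof -
  have t0: "0 \<le> t" using t by simp
  have rd0: "rd t x0 = 0"
    by (rule DERIV_local_max[OF rdd[OF t0], of 1]) (use mx in auto)
  have a: "f1 (A t x0) < 0" "1 \<le> g (B t x0)" "0 < f (A t x0)" "0 < g1 (B t x0)"
    using f1neg gge1 fpos g1pos AB_pos[OF t0, of x0] by auto
  have ad: "(\<rho> t (x0+\<eta>) - \<rho> t x0) / \<eta> \<le> 0" using mx eta by (simp add: divide_nonpos_pos)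
  have bd: "0 \<le> \<rho> t x0 - M t" using M_le_max[OF t0 mx] by simp
  have "0 \<le> f1 (A t x0) * ((\<rho> t (x0+\<eta>) - \<rho> t x0) / \<eta>)"
    by (rule mult_nonpos_nonpos[OF less_imp_le[OF a(1)] ad])
  then have v1: "0 \<le> f1 (A t x0) * ((\<rho> t (x0+\<eta>) - \<rho> t x0) / \<eta>) * g (B t x0)"
    by (rule mult_nonneg_nonneg) (use a(2) in linarith)
  have "0 \<le> g1 (B t x0) * (\<rho> t x0 - M t)" using a(4) bd by simp
  then have v2: "0 \<le> f (A t x0) * (g1 (B t x0) * (\<rho> t x0 - M t))" using a(3) by simp
  have "0 \<le> vx t x0" using v1 v2 by (simp add: vx_def)
  then have "0 \<le> \<rho> t x0 * vx t x0" using pos[OF t0, of x0] by simp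
  then show ?thesis using pde_eq[OF t, of x0] rd0 by simp
qed

lemma min_principle:
  assumes init: "\<And>x. m \<le> \<rho> 0 x" and t: "0 \<le> t"
  shows "m \<le> \<rho> t x"
  by (rule first_time_principle[where u = \<rho> and ut = \<rho>t, OF rcont per init rt_at key_min t])

lemma max_principle:
  assumes init: "\<And>x. \<rho> 0 x \<le> Mx" and t: "0 \<le> t"
  shows "\<rho> t x \<le> Mx"
proof -
  have c: "continuous_on ({0..} \<times> UNIV) (\<lambda>(t,x). - \<rho> t x)"
  proof -
    have "continuous_on ({0..} \<times> UNIV) (\<lambda>p. - (\<lambda>(t,x). \<rho> t x) p)"
      by (intro continuous_on_minus rcont)
    then show ?thesis by (simp add: case_prod_beta')
  qed
  have "- Mx \<le> - \<rho> t x"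
  proof (rule first_time_principle[where u = "\<lambda>t x. - \<rho> t x" and ut = "\<lambda>t x. - \<rho>t t x", OF c _ _ _ _ t])
    show "\<And>t x. 0 \<le> t \<Longrightarrow> - \<rho> t (x + 1) = - \<rho> t x" using per by simp
    show "\<And>x. - Mx \<le> - \<rho> 0 x" using init by simp
    show "\<And>t x. 0 < t \<Longrightarrow> ((\<lambda>s. - \<rho> s x) has_real_derivative - \<rho>t t x) (at t)"
      by (intro DERIV_minus rt_at)
    show "\<And>t x0. 0 < t \<Longrightarrow> \<forall>y. - \<rho> t x0 \<le> - \<rho> t y \<Longrightarrow> 0 \<le> - \<rho>t t x0"
      using key_max by simp
  qed
  then show ?thesis by simp
qed

end

lemma pw_bound:
  fixes a b p q \<eta> amax amin bmin :: real
  assumes "0 < \<eta>" "0 \<le> a" "amin \<le> a" "a \<le> amax" "bmin \<le> b"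
  shows "a * p * (q - p) / \<eta> - b * p\<^sup>2 \<le> (amax * q\<^sup>2 - amin * p\<^sup>2) / (2 * \<eta>) - bmin * p\<^sup>2"
proof -
  have "2 * (p * q) \<le> p\<^sup>2 + q\<^sup>2" using sum_squares_bound[of p q] by simp
  then have "a * (2 * (p * q)) \<le> a * (p\<^sup>2 + q\<^sup>2)" using assms(2) by (rule mult_left_mono)
  then have "2 * (a * p * (q - p)) \<le> a * q\<^sup>2 - a * p\<^sup>2" by (simp add: algebra_simps power2_eq_square)
  also have "\<dots> \<le> amax * q\<^sup>2 - amin * p\<^sup>2"
  proof -
    have "a * q\<^sup>2 \<le> amax * q\<^sup>2" using assms(4) by (simp add: mult_right_mono)
    moreover have "amin * p\<^sup>2 \<le> a * p\<^sup>2" using assms(3) by (simp add: mult_right_mono)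
    ultimately show ?thesis by linarith
  qed
  finally have "a * p * (q - p) \<le> (amax * q\<^sup>2 - amin * p\<^sup>2) / 2" by simp
  then have "a * p * (q - p) / \<eta> \<le> (amax * q\<^sup>2 - amin * p\<^sup>2) / 2 / \<eta>"
    using assms(1) by (intro divide_right_mono) auto
  then have 1: "a * p * (q - p) / \<eta> \<le> (amax * q\<^sup>2 - amin * p\<^sup>2) / (2 * \<eta>)"
    by (simp add: divide_divide_eq_left)
  have 2: "bmin * p\<^sup>2 \<le> b * p\<^sup>2" using assms(5) by (simp add: mult_right_mono)
  show ?thesis using 1 2 by linarith
qed

context sol begin

lemma rt_cont_x: "0 \<le> t \<Longrightarrow> continuous_on UNIV (\<rho>t t)"
proof -
  assume t: "0 \<le> t"
  have "continuous_on UNIV (\<lambda>x. (\<lambda>(t,x). \<rho>t t x) (t, x))"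
    by (rule continuous_on_compose2[OF rtcont]) (use t in \<open>auto intro!: continuous_intros\<close>)
  then show ?thesis by simp
qed

definition E where "E c t = integral {0..1} (\<lambda>x. phi c (\<rho> t x))"

lemma E_deriv:
  assumes c: "0 < c" and t: "0 \<le> t"
  shows "(E c has_real_derivative integral {0..1} (\<lambda>x. ln (\<rho> t x / c) * \<rho>t t x)) (at t within {0..})"
proof -
  have "((\<lambda>t. integral (cbox 0 1) (\<lambda>x. phi c (\<rho> t x))) has_field_derivative
          integral (cbox 0 1) (\<lambda>x. ln (\<rho> t x / c) * \<rho>t t x)) (at t within {0..})"
  proof (rule leibniz_rule_field_derivative[where f = "\<lambda>t x. phi c (\<rho> t x)"])
    fix s x assume s: "s \<in> {0::real..}" and "x \<in> cbox (0::real) 1"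
    have "(phi c has_real_derivative ln (\<rho> s x / c)) (at (\<rho> s x))"
      by (rule phi_deriv[OF c pos]) (use s in auto)
    from DERIV_chain2[OF this rtd] s
    show "((\<lambda>s. phi c (\<rho> s x)) has_real_derivative ln (\<rho> s x / c) * \<rho>t s x) (at s within {0..})"
      by auto
  next
    fix s assume s: "s \<in> {0::real..}"
    then have s0: "0 \<le> s" by simp
    have "continuous_on {0..1} (\<lambda>x. phi c (\<rho> s x))"
    proof -
      have nz: "\<rho> s x / c \<noteq> 0" for x using c pos[OF s0, of x] by simp
      show ?thesis unfolding phi_def
        by (intro continuous_intros continuous_on_subset[OF rc[OF s0]]) (use nz in auto)
    qed
    then show "(\<lambda>x. phi c (\<rho> s x)) integrable_on cbox 0 1"
      by (simp add: integrable_continuous_interval)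
  next
    define S where "S = ({0::real..} \<times> cbox (0::real) 1)"
    have c1: "continuous_on S (\<lambda>p. \<rho> (fst p) (snd p))"
      using continuous_on_subset[OF rcont, of S] by (auto simp: S_def case_prod_beta')
    have c2: "continuous_on S (\<lambda>p. \<rho>t (fst p) (snd p))"
      using continuous_on_subset[OF rtcont, of S] by (auto simp: S_def case_prod_beta')
    have "continuous_on S (\<lambda>p. ln (\<rho> (fst p) (snd p) / c) * \<rho>t (fst p) (snd p))"
    proof -
      have nz: "\<rho> a b \<noteq> 0" if "0 \<le> a" for a b using pos[OF that, of b] by simp
      show ?thesis using c by (intro continuous_intros c1 c2) (auto simp: S_def nz)
    qed
    then show "continuous_on ({0..} \<times> cbox 0 1) (\<lambda>(s, x). ln (\<rho> s x / c) * \<rho>t s x)"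
      by (simp add: S_def case_prod_beta')
  qed (use t in auto)
  then show ?thesis by (simp add: E_def[abs_def])
qed

lemma E_cont:
  assumes c: "0 < c"
  shows "continuous_on {0..T} (E c)"
proof (rule DERIV_continuous_on)
  fix s assume "s \<in> {0..T}"
  then show "(E c has_real_derivative integral {0..1} (\<lambda>x. ln (\<rho> s x / c) * \<rho>t s x)) (at s within {0..T})"
    by (intro DERIV_subset[OF E_deriv[OF c]]) auto
qed

lemma E_ibp:
  assumes c: "0 < c" and t: "0 < t"
  shows "(\<lambda>x. (\<rho> t x - c) * vx t x) integrable_on {0..1}"
        "integral {0..1} (\<lambda>x. ln (\<rho> t x / c) * \<rho>t t x) = - integral {0..1} (\<lambda>x. (\<rho> t x - c) * vx t x)"
proof -
  have t0: "0 \<le> t" using t by simp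
  define v where "v = velocity \<eta> f g \<rho> t"
  define G where "G = (\<lambda>y. ln (\<rho> t y / c) * (\<rho> t y * v y) - (\<rho> t y - c) * v y)"
  define G' where "G' = (\<lambda>y. - (ln (\<rho> t y / c) * \<rho>t t y) - (\<rho> t y - c) * vx t y)"
  have Gd: "(G has_real_derivative G' y) (at y)" for y
  proof -
    have ry: "0 < \<rho> t y" by (rule pos[OF t0])
    have l: "((\<lambda>y. ln (\<rho> t y / c)) has_real_derivative (rd t y / c) / (\<rho> t y / c)) (at y)"
      using ry c by (auto intro!: derivative_eq_intros rdd[OF t0])
    have P: "((\<lambda>y. \<rho> t y * v y) has_real_derivative - \<rho>t t y) (at y)"
      unfolding v_def by (rule pde[OF t])
    have Q: "((\<lambda>y. (\<rho> t y - c) * v y) has_real_derivative (\<rho> t y - c) * vx t y + rd t y * v y) (at y)"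
    proof -
      have rc': "((\<lambda>y. \<rho> t y - c) has_real_derivative rd t y) (at y)"
        using DERIV_diff[OF rdd[OF t0] DERIV_const[of c]] by simp
      show ?thesis unfolding v_def by (rule DERIV_mult'[OF rc' v_deriv[OF t0]])
    qed
    have "(G has_real_derivative (ln (\<rho> t y / c) * (- \<rho>t t y) + (rd t y / c) / (\<rho> t y / c) * (\<rho> t y * v y))
          - ((\<rho> t y - c) * vx t y + rd t y * v y)) (at y)"
      unfolding G_def by (intro DERIV_diff DERIV_mult' l P Q)
    moreover have "(rd t y / c) / (\<rho> t y / c) * (\<rho> t y * v y) = rd t y * v y"
      using ry c by (simp add: field_simps)
    ultimately show ?thesis by (simp add: G'_def algebra_simps)
  qed
  have "(G' has_integral G 1 - G 0) {0..1}"
  proof (rule fundamental_theorem_of_calculus)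
    fix y :: real
    show "(G has_vector_derivative G' y) (at y within {0..1})"
      using Gd[of y] by (simp add: has_real_derivative_iff_has_vector_derivative[symmetric] has_field_derivative_at_within)
  qed simp
  moreover have "G 1 = G 0" using per[OF t0, of 0] vel_per[OF t0, of 0] by (simp add: G_def v_def)
  ultimately have G'i: "(G' has_integral 0) {0..1}" by simp
  have li: "(\<lambda>x. ln (\<rho> t x / c) * \<rho>t t x) integrable_on {0..1}"
  proof -
    have nz: "\<rho> t b \<noteq> 0" for b using pos[OF t0, of b] by simp
    show ?thesis using c
      by (intro integrable_continuous_interval continuous_intros continuous_on_subset[OF rc[OF t0]]
          continuous_on_subset[OF rt_cont_x[OF t0]]) (auto simp: nz)
  qed
  have eq: "(\<lambda>x. (\<rho> t x - c) * vx t x) = (\<lambda>x. - G' x - ln (\<rho> t x / c) * \<rho>t t x)"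
    by (simp add: G'_def fun_eq_iff)
  have i2: "((\<lambda>x. - G' x - ln (\<rho> t x / c) * \<rho>t t x) has_integral (- 0 - integral {0..1} (\<lambda>x. ln (\<rho> t x / c) * \<rho>t t x))) {0..1}"
    by (intro has_integral_diff has_integral_neg G'i integrable_integral li)
  show "(\<lambda>x. (\<rho> t x - c) * vx t x) integrable_on {0..1}" unfolding eq using i2 by blast
  show "integral {0..1} (\<lambda>x. ln (\<rho> t x / c) * \<rho>t t x) = - integral {0..1} (\<lambda>x. (\<rho> t x - c) * vx t x)"
    unfolding eq using integral_unique[OF i2] by simp
qed

end

context sol begin

lemma decay:
  fixes rmin rmax amax amin bmin :: real
  assumes rmin: "0 < rmin"
    and bnd1: "\<And>t x. 0 \<le> t \<Longrightarrow> rmin \<le> \<rho> t x" and bnd2: "\<And>t x. 0 \<le> t \<Longrightarrow> \<rho> t x \<le> rmax"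
    and rsb: "rmin \<le> M 0" "M 0 \<le> rmax"
    and cst: "\<And>y z. rmin \<le> y \<Longrightarrow> y \<le> min (M 0 / \<eta>) rmax \<Longrightarrow> max (M 0 - rmax / 2) (rmin / 2) \<le> z
               \<Longrightarrow> z \<le> min (M 0 - rmin / 2) (rmax / 2)
               \<Longrightarrow> - f1 y * g z \<le> amax \<and> amin \<le> - f1 y * g z \<and> bmin \<le> f y * g1 z"
    and kap: "0 < bmin - (amax - amin) / (2 * \<eta>)"
    and t: "0 \<le> t"
  shows "integral {0..1} (\<lambda>x. (\<rho> t x - M 0)\<^sup>2)
     \<le> rmax / rmin * exp (- (2 * (bmin - (amax - amin) / (2 * \<eta>)) * rmin) * t)
        * integral {0..1} (\<lambda>x. (\<rho> 0 x - M 0)\<^sup>2)"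
proof -
  define rs where "rs = M 0"
  define \<kappa> where "\<kappa> = bmin - (amax - amin) / (2 * \<eta>)"
  define c where "c = 2 * \<kappa> * rmin"
  define U where "U = (\<lambda>s. integral {0..1} (\<lambda>x. (\<rho> s x - rs)\<^sup>2))"
  have rs0: "0 < rs" using rsb rmin by (simp add: rs_def)
  have rmax0: "0 < rmax" using rsb rmin by simp
  have \<kappa>0: "0 < \<kappa>" using kap by (simp add: \<kappa>_def)
  have massr: "M s = rs" if "0 \<le> s" for s using mass[OF that] by (simp add: rs_def)
  have Ui: "(\<lambda>x. (\<rho> s x - rs)\<^sup>2) integrable_on {0..1}" if "0 \<le> s" for s
    by (intro integrable_continuous_interval continuous_intros continuous_on_subset[OF rc[OF that]]) auto
  have Ei: "(\<lambda>x. phi rs (\<rho> s x)) integrable_on {0..1}" if s: "0 \<le> s" for s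
  proof -
    have nz: "\<rho> s x / rs \<noteq> 0" for x using rs0 pos[OF s, of x] by simp
    show ?thesis unfolding phi_def
      by (intro integrable_continuous_interval continuous_intros continuous_on_subset[OF rc[OF s]]) (use nz in auto)
  qed
  have U_le: "U s \<le> 2 * rmax * E rs s" if s: "0 \<le> s" for s
  proof -
    have "U s \<le> integral {0..1} (\<lambda>x. 2 * rmax * phi rs (\<rho> s x))"
      unfolding U_def
    proof (rule integral_le[OF Ui[OF s]])
      show "(\<lambda>x. 2 * rmax * phi rs (\<rho> s x)) integrable_on {0..1}" by (intro integrable_on_mult_right Ei[OF s])
      fix x :: real
      have "(\<rho> s x - rs)\<^sup>2 / (2 * rmax) \<le> phi rs (\<rho> s x)"
        by (rule phi_lower[OF rs0 pos[OF s] bnd2[OF s]]) (use rsb in \<open>simp add: rs_def\<close>)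
      then show "(\<rho> s x - rs)\<^sup>2 \<le> 2 * rmax * phi rs (\<rho> s x)" using rmax0 by (simp add: field_simps)
    qed
    then show ?thesis by (simp add: E_def)
  qed
  have U_ge: "2 * rmin * E rs s \<le> U s" if s: "0 \<le> s" for s
  proof -
    have "integral {0..1} (\<lambda>x. 2 * rmin * phi rs (\<rho> s x)) \<le> U s"
      unfolding U_def
    proof (rule integral_le[OF _ Ui[OF s]])
      show "(\<lambda>x. 2 * rmin * phi rs (\<rho> s x)) integrable_on {0..1}" by (intro integrable_on_mult_right Ei[OF s])
      fix x :: real
      have "phi rs (\<rho> s x) \<le> (\<rho> s x - rs)\<^sup>2 / (2 * rmin)"
        by (rule phi_upper[OF rmin bnd1[OF s]]) (use rsb in \<open>simp add: rs_def\<close>)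
      then show "2 * rmin * phi rs (\<rho> s x) \<le> (\<rho> s x - rs)\<^sup>2" using rmin by (simp add: field_simps)
    qed
    then show ?thesis by (simp add: E_def)
  qed
  have Ed: "integral {0..1} (\<lambda>x. ln (\<rho> s x / rs) * \<rho>t s x) \<le> - \<kappa> * U s" if s: "0 < s" for s
  proof -
    have s0: "0 \<le> s" using s by simp
    define p where "p = (\<lambda>y. \<rho> s y - rs)"
    define q where "q = (\<lambda>y. \<rho> s (y + \<eta>) - rs)"
    define K1 where "K1 = amax / (2 * \<eta>)"
    define K2 where "K2 = - (amin / (2 * \<eta>)) - bmin"
    have pw: "- ((\<rho> s y - rs) * vx s y) \<le> K1 * (q y)\<^sup>2 + K2 * (p y)\<^sup>2" for y
    proof -
      define a where "a = - f1 (A s y) * g (B s y)"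
      define b where "b = f (A s y) * g1 (B s y)"
      have Ab: "rmin \<le> A s y" "A s y \<le> rmax" "A s y \<le> M s / \<eta>"
        using A_bounds[OF eta rc[OF s0] perf[OF s0], of rmin rmax y] bnd1[OF s0] bnd2[OF s0] rmin
        by (auto simp: A_def M_def)
      have Bb: "rmin / 2 \<le> B s y" "B s y \<le> rmax / 2" "B s y \<le> M s - rmin / 2" "M s - rmax / 2 \<le> B s y"
        using B_bounds[OF rc[OF s0] perf[OF s0], of rmin rmax y] bnd1[OF s0] bnd2[OF s0]
        by (auto simp: B_def M_def)
      have cs: "- f1 (A s y) * g (B s y) \<le> amax \<and> amin \<le> - f1 (A s y) * g (B s y) \<and> bmin \<le> f (A s y) * g1 (B s y)"
        by (rule cst) (use Ab Bb massr[OF s0] in \<open>auto simp: rs_def\<close>)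
      have a0: "0 \<le> a"
      proof -
        have "0 < A s y" "0 < B s y" using AB_pos[OF s0] by auto
        then have "f1 (A s y) < 0" "1 \<le> g (B s y)" using f1neg gge1 by auto
        then show ?thesis unfolding a_def by (simp add: mult_nonpos_nonneg)
      qed
      have "- ((\<rho> s y - rs) * vx s y) = a * p y * (q y - p y) / \<eta> - b * (p y)\<^sup>2"
        using eta massr[OF s0] by (simp add: vx_def a_def b_def p_def q_def field_simps power2_eq_square)
      also have "\<dots> \<le> (amax * (q y)\<^sup>2 - amin * (p y)\<^sup>2) / (2 * \<eta>) - bmin * (p y)\<^sup>2"
        by (rule pw_bound[OF eta(1) a0]) (use cs in \<open>auto simp: a_def b_def\<close>)
      also have "\<dots> = K1 * (q y)\<^sup>2 + K2 * (p y)\<^sup>2"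
        by (simp add: K1_def K2_def diff_divide_distrib algebra_simps)
      finally show ?thesis .
    qed
    have pi: "(\<lambda>y. (p y)\<^sup>2) integrable_on {0..1}" unfolding p_def by (rule Ui[OF s0])
    have qc: "continuous_on UNIV (\<lambda>y. (p y)\<^sup>2)" unfolding p_def by (intro continuous_intros rc[OF s0])
    have qi: "(\<lambda>y. (q y)\<^sup>2) integrable_on {0..1}" unfolding q_def
      by (intro integrable_continuous_interval continuous_intros continuous_on_compose2[OF rc[OF s0], of _ "\<lambda>y. y + \<eta>"]) auto
    have pper: "\<forall>x. (p (x + 1))\<^sup>2 = (p x)\<^sup>2" using per[OF s0] by (simp add: p_def)
    have qp: "integral {0..1} (\<lambda>y. (q y)\<^sup>2) = integral {0..1} (\<lambda>y. (p y)\<^sup>2)"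
      using per_integral_shift[OF qc pper, of \<eta>] by (simp add: p_def q_def)
    have li: "(\<lambda>x. - ((\<rho> s x - rs) * vx s x)) integrable_on {0..1}"
      using E_ibp(1)[OF rs0 s] by (rule integrable_neg)
    have "integral {0..1} (\<lambda>x. - ((\<rho> s x - rs) * vx s x)) \<le> integral {0..1} (\<lambda>y. K1 * (q y)\<^sup>2 + K2 * (p y)\<^sup>2)"
      by (rule integral_le[OF li]) (use pw qi pi in \<open>auto intro!: integrable_add integrable_on_mult_right\<close>)
    also have "\<dots> = K1 * integral {0..1} (\<lambda>y. (q y)\<^sup>2) + K2 * integral {0..1} (\<lambda>y. (p y)\<^sup>2)"
      using qi pi by (simp add: integral_add integrable_on_mult_right)
    also have "\<dots> = (K1 + K2) * U s" using qp by (simp add: U_def p_def algebra_simps)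
    also have "K1 + K2 = - \<kappa>" by (simp add: K1_def K2_def \<kappa>_def diff_divide_distrib)
    finally have "integral {0..1} (\<lambda>x. - ((\<rho> s x - rs) * vx s x)) \<le> - \<kappa> * U s" .
    moreover have "integral {0..1} (\<lambda>x. - ((\<rho> s x - rs) * vx s x)) = - integral {0..1} (\<lambda>x. (\<rho> s x - rs) * vx s x)"
      by (rule integral_neg)
    ultimately show ?thesis using E_ibp(2)[OF rs0 s] by simp
  qed
  define H where "H = (\<lambda>s. E rs s * exp (c * s))"
  have "H t \<le> H 0"
  proof (rule DERIV_nonpos_imp_decreasing_open[OF t])
    fix s assume s: "0 < s" "s < t"
    have s0: "0 \<le> s" using s by simp
    define D where "D = integral {0..1} (\<lambda>x. ln (\<rho> s x / rs) * \<rho>t s x)"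
    have Ed': "(E rs has_real_derivative D) (at s)"
      using E_deriv[OF rs0 s0] at_interior_real[OF s(1)] by (simp add: D_def)
    have Hd: "(H has_real_derivative D * exp (c * s) + E rs s * (exp (c * s) * c)) (at s)"
      unfolding H_def using Ed' by (auto intro!: derivative_eq_intros)
    have "D \<le> - \<kappa> * U s" using Ed[OF s(1)] by (simp add: D_def)
    also have "\<dots> \<le> - \<kappa> * (2 * rmin * E rs s)" using U_ge[OF s0] \<kappa>0 by simp
    finally have "D + c * E rs s \<le> 0" by (simp add: c_def algebra_simps)
    then have "(D + c * E rs s) * exp (c * s) \<le> 0" by (simp add: mult_nonpos_nonneg)
    then show "\<exists>y. (H has_real_derivative y) (at s) \<and> y \<le> 0"
      using Hd by (intro exI[of _ "D * exp (c * s) + E rs s * (exp (c * s) * c)"]) (simp add: algebra_simps)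
  next
    show "continuous_on {0..t} H" unfolding H_def
      by (intro continuous_intros E_cont[OF rs0])
  qed
  then have "E rs t * exp (c * t) \<le> E rs 0" by (simp add: H_def)
  then have Et: "E rs t \<le> E rs 0 * exp (- (c * t))"
    by (simp add: exp_minus field_simps)
  have "U t \<le> 2 * rmax * E rs t" by (rule U_le[OF t])
  also have "\<dots> \<le> 2 * rmax * (E rs 0 * exp (- (c * t)))" using Et rmax0 by simp
  also have "\<dots> \<le> 2 * rmax * (U 0 / (2 * rmin) * exp (- (c * t)))"
  proof -
    have "E rs 0 \<le> U 0 / (2 * rmin)" using U_ge[of 0] rmin by (simp add: field_simps)
    then have "E rs 0 * exp (- (c * t)) \<le> U 0 / (2 * rmin) * exp (- (c * t))"
      by (rule mult_right_mono) simp
    then show ?thesis by (rule mult_left_mono) (use rmax0 in simp)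
  qed
  also have "\<dots> = rmax / rmin * exp (- (c * t)) * U 0" using rmin by (simp add: field_simps)
  finally show ?thesis by (simp add: U_def rs_def c_def \<kappa>_def)
qed

end

lemma mono_from_deriv:
  fixes g g1 :: "real \<Rightarrow> real"
  assumes gd: "\<And>y. 0 \<le> y \<Longrightarrow> (g has_real_derivative g1 y) (at y within {0..})"
    and gp: "\<And>y. 0 \<le> y \<Longrightarrow> 0 \<le> g1 y"
    and ab: "0 \<le> a" "a \<le> b"
  shows "g a \<le> g b"
proof (rule DERIV_nonneg_imp_increasing_open[OF ab(2)])
  fix y assume y: "a < y" "y < b"
  then have "0 < y" using ab by simp
  then have "(g has_real_derivative g1 y) (at y)" using gd[of y] at_interior_real[of y] by simp
  then show "\<exists>z. (g has_real_derivative z) (at y) \<and> 0 \<le> z" using gp[of y] \<open>0 < y\<close> by auto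
next
  show "continuous_on {a..b} g"
  proof (rule DERIV_continuous_on)
    fix y assume "y \<in> {a..b}"
    then show "(g has_real_derivative g1 y) (at y within {a..b})"
      using ab by (intro DERIV_subset[OF gd]) auto
  qed
qed

lemma rtd_from_C1:
  fixes \<rho> :: "real \<Rightarrow> real \<Rightarrow> real"
  assumes d: "((\<lambda>(s,y). \<rho> s y) has_derivative (\<lambda>(h,k). a * h + b * k)) (at (t,x) within ({0..} \<times> UNIV))"
  shows "((\<lambda>s. \<rho> s x) has_real_derivative a) (at t within {0..})"
proof -
  have i: "((\<lambda>s. (s, x)) has_derivative (\<lambda>h. (h, 0))) (at t within {0..})"
    by (auto intro!: derivative_eq_intros)
  have d': "((\<lambda>(s,y). \<rho> s y) has_derivative (\<lambda>(h,k). a * h + b * k)) (at ((\<lambda>s. (s, x)) t) within ((\<lambda>s. (s, x)) ` {0..}))"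
    using d by (rule has_derivative_subset) auto
  have "((\<lambda>s. (\<lambda>(s,y). \<rho> s y) (s, x)) has_derivative (\<lambda>h. (\<lambda>(h,k). a * h + b * k) (h, 0))) (at t within {0..})"
    by (rule has_derivative_in_compose[OF i d'])
  then have "((\<lambda>s. \<rho> s x) has_derivative (\<lambda>h. a * h)) (at t within {0..})" by simp
  then show ?thesis by (simp add: has_field_derivative_def mult.commute[of a] mult_commute_abs)
qed

theorem theorem3p2:
  fixes \<eta> M :: real and f f1 f2 f3 g g1 g2 g3 \<rho>0 :: "real \<Rightarrow> real"
  assumes eta: "0 < \<eta>" "\<eta> \<le> 1"
    and f_C3: "C3_nonneg f f1 f2 f3" and g_C3: "C3_nonneg g g1 g2 g3"
    and f_dec: "\<forall>r\<ge>0. f1 r < 0" and g_inc: "\<forall>r\<ge>0. g1 r > 0"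
    and f_pos: "\<forall>r\<ge>0. f r > 0" and g_ge1: "\<forall>r\<ge>0. g r \<ge> 1"
    and M: "M \<ge> 0"
    and bound: "\<exists>Mf Mg. Mf + Mg \<le> M \<and>
        (\<forall>r\<ge>0. \<bar>f r\<bar> + \<bar>f1 r\<bar> + \<bar>f2 r\<bar> + \<bar>f3 r\<bar> \<le> Mf) \<and>
        (\<forall>r\<ge>0. \<bar>g r\<bar> + \<bar>g1 r\<bar> + \<bar>g2 r\<bar> + \<bar>g3 r\<bar> \<le> Mg)"
    and init: "W2inf \<rho>0" "Per \<rho>0"
    and cond:
      "let rs = integral {0..1} \<rho>0;
           rmin = Inf (\<rho>0 ` {0..1});
           rmax = Sup (\<rho>0 ` {0..1});
           Fmax = Sup ((\<lambda>s. \<bar>f1 s\<bar>) ` {rmin .. min (rs / \<eta>) rmax});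
           Fmin = Inf ((\<lambda>s. \<bar>f1 s\<bar>) ` {rmin .. min (rs / \<eta>) rmax});
           fmin = f (min (rs / \<eta>) rmax);
           gmax = g (min (2 * rs - rmin) rmax / 2);
           gmin = g (max (2 * rs - rmax) rmin / 2);
           Gmin = Inf (g1 ` {s. max (2 * rs - rmax) rmin \<le> 2 * s \<and> 2 * s \<le> min (2 * rs - rmin) rmax})
       in Fmax * gmax - Fmin * gmin < 2 * \<eta> * fmin * Gmin"
  shows "\<exists>c>0. \<forall>\<rho>. is_solution \<eta> f g \<rho>0 \<rho> \<longrightarrow>
           (\<forall>t\<ge>0. integral {0..1} (\<lambda>x. (\<rho> t x - integral {0..1} \<rho>0)\<^sup>2)
              \<le> Sup (\<rho>0 ` {0..1}) / Inf (\<rho>0 ` {0..1}) * exp (- c * t)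
                 * integral {0..1} (\<lambda>x. (\<rho>0 x - integral {0..1} \<rho>0)\<^sup>2))"
proof -
  define rs where "rs = integral {0..1} \<rho>0"
  define rmin where "rmin = Inf (\<rho>0 ` {0..1})"
  define rmax where "rmax = Sup (\<rho>0 ` {0..1})"
  define Fmax where "Fmax = Sup ((\<lambda>s. \<bar>f1 s\<bar>) ` {rmin .. min (rs / \<eta>) rmax})"
  define Fmin where "Fmin = Inf ((\<lambda>s. \<bar>f1 s\<bar>) ` {rmin .. min (rs / \<eta>) rmax})"
  define fmin where "fmin = f (min (rs / \<eta>) rmax)"
  define gmax where "gmax = g (min (2 * rs - rmin) rmax / 2)"
  define gmin where "gmin = g (max (2 * rs - rmax) rmin / 2)"
  define GS where "GS = {s. max (2 * rs - rmax) rmin \<le> 2 * s \<and> 2 * s \<le> min (2 * rs - rmin) rmax}"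
  define Gmin where "Gmin = Inf (g1 ` GS)"
  have condi: "Fmax * gmax - Fmin * gmin < 2 * \<eta> * fmin * Gmin"
    using cond unfolding Let_def rs_def rmin_def rmax_def Fmax_def Fmin_def fmin_def gmax_def gmin_def Gmin_def GS_def .
  define amax where "amax = Fmax * gmax"
  define amin where "amin = Fmin * gmin"
  define bmin where "bmin = fmin * Gmin"
  define \<kappa> where "\<kappa> = bmin - (amax - amin) / (2 * \<eta>)"
  have \<kappa>0: "0 < \<kappa>"
  proof -
    have "amax - amin < bmin * (2 * \<eta>)"
      using condi by (simp add: amax_def amin_def bmin_def ac_simps)
    then have "(amax - amin) / (2 * \<eta>) < bmin"
      using eta by (simp add: pos_divide_less_eq)
    then show ?thesis by (simp add: \<kappa>_def)
  qed
  have fd: "\<And>y. 0 \<le> y \<Longrightarrow> (f has_real_derivative f1 y) (at y within {0..})"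
    using f_C3 by (simp add: C3_nonneg_def)
  have gd: "\<And>y. 0 \<le> y \<Longrightarrow> (g has_real_derivative g1 y) (at y within {0..})"
    using g_C3 by (simp add: C3_nonneg_def)
  obtain Mf where Mf: "\<forall>r\<ge>0. \<bar>f1 r\<bar> \<le> Mf"
  proof -
    obtain Mf Mg where "\<forall>r\<ge>0. \<bar>f r\<bar> + \<bar>f1 r\<bar> + \<bar>f2 r\<bar> + \<bar>f3 r\<bar> \<le> Mf" using bound by blast
    then have "\<forall>r\<ge>0. \<bar>f1 r\<bar> \<le> Mf"
    proof (intro allI impI)
      fix r :: real assume "\<forall>r\<ge>0. \<bar>f r\<bar> + \<bar>f1 r\<bar> + \<bar>f2 r\<bar> + \<bar>f3 r\<bar> \<le> Mf" "0 \<le> r"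
      then have "\<bar>f r\<bar> + \<bar>f1 r\<bar> + \<bar>f2 r\<bar> + \<bar>f3 r\<bar> \<le> Mf" by blast
      moreover have "0 \<le> \<bar>f r\<bar>" "0 \<le> \<bar>f2 r\<bar>" "0 \<le> \<bar>f3 r\<bar>" by auto
      ultimately show "\<bar>f1 r\<bar> \<le> Mf" by linarith
    qed
    then show ?thesis using that by blast
  qed
  have f_mono: "f b \<le> f a" if "0 \<le> a" "a \<le> b" for a b
  proof -
    have "(\<lambda>x. - f x) a \<le> (\<lambda>x. - f x) b"
    proof (rule mono_from_deriv[OF _ _ that])
      show "\<And>y. 0 \<le> y \<Longrightarrow> ((\<lambda>x. - f x) has_real_derivative - f1 y) (at y within {0..})"
        using fd by (intro DERIV_minus) auto
      show "\<And>y. 0 \<le> y \<Longrightarrow> 0 \<le> - f1 y" using f_dec by (auto intro: less_imp_le)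
    qed
    then show ?thesis by simp
  qed
  have g_mono: "g a \<le> g b" if "0 \<le> a" "a \<le> b" for a b
    by (rule mono_from_deriv[OF gd _ that]) (use g_inc in \<open>auto intro: less_imp_le\<close>)
    have r0c: "continuous_on UNIV \<rho>0" and r0p: "\<forall>x. 0 < \<rho>0 x" and r0per: "\<forall>x. \<rho>0 (x+1) = \<rho>0 x"
    using init(2) by (auto simp: Per_def)
  have c01: "continuous_on {0..1} \<rho>0" by (rule continuous_on_subset[OF r0c]) auto
  obtain a where a: "a \<in> {0..1}" "\<forall>y\<in>{0..1}. \<rho>0 a \<le> \<rho>0 y"
    using continuous_attains_inf[OF compact_Icc _ c01] by auto
  obtain b where b: "b \<in> {0..1}" "\<forall>y\<in>{0..1}. \<rho>0 y \<le> \<rho>0 b"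
    using continuous_attains_sup[OF compact_Icc _ c01] by auto
  have rmin_eq: "rmin = \<rho>0 a" unfolding rmin_def by (rule cInf_eq_minimum) (use a in auto)
  have rmax_eq: "rmax = \<rho>0 b" unfolding rmax_def by (rule cSup_eq_maximum) (use b in auto)
  have r0b: "rmin \<le> \<rho>0 x" "\<rho>0 x \<le> rmax" for x
    using a(2)[rule_format, OF per_frac(2)[OF r0per, of x]] b(2)[rule_format, OF per_frac(2)[OF r0per, of x]]
      per_frac(1)[OF r0per, of x] rmin_eq rmax_eq by auto
  have rmin0: "0 < rmin" using rmin_eq r0p by simp
  have rsb: "rmin \<le> rs" "rs \<le> rmax"
  proof -
    have "integral {0..1} (\<lambda>_::real. rmin) \<le> integral {0..1} \<rho>0"
      by (rule integral_le[OF integrable_const_ivl cont_int[OF r0c]]) (use r0b in auto)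
    then show "rmin \<le> rs" by (simp add: rs_def)
    have "integral {0..1} \<rho>0 \<le> integral {0..1} (\<lambda>_::real. rmax)"
      by (rule integral_le[OF cont_int[OF r0c] integrable_const_ivl]) (use r0b in auto)
    then show "rs \<le> rmax" by (simp add: rs_def)
  qed
    have cst: "- f1 y * g z \<le> amax \<and> amin \<le> - f1 y * g z \<and> bmin \<le> f y * g1 z"
    if y: "rmin \<le> y" "y \<le> min (rs / \<eta>) rmax" and z: "max (rs - rmax / 2) (rmin / 2) \<le> z" "z \<le> min (rs - rmin / 2) (rmax / 2)"
    for y z
  proof -
    have y0: "0 \<le> y" using y rmin0 by simp
    have z0: "0 \<le> z" using z rmin0 by simp
    have yI: "y \<in> {rmin .. min (rs / \<eta>) rmax}" using y by simp
    have "f1 y < 0" using f_dec y0 by blast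
    then have af: "\<bar>f1 y\<bar> = - f1 y" by simp
    have Fup: "\<bar>f1 y\<bar> \<le> Fmax" unfolding Fmax_def
    proof (rule cSup_upper)
      show "\<bar>f1 y\<bar> \<in> (\<lambda>s. \<bar>f1 s\<bar>) ` {rmin..min (rs / \<eta>) rmax}" using yI by simp
      show "bdd_above ((\<lambda>s. \<bar>f1 s\<bar>) ` {rmin..min (rs / \<eta>) rmax})"
      proof (rule bdd_aboveI)
        fix w assume "w \<in> (\<lambda>s. \<bar>f1 s\<bar>) ` {rmin..min (rs / \<eta>) rmax}"
        then obtain s where "s \<in> {rmin..min (rs / \<eta>) rmax}" "w = \<bar>f1 s\<bar>" by auto
        moreover then have "0 \<le> s" using rmin0 by simp
        ultimately show "w \<le> Mf" using Mf by simp
      qed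
    qed
    have Flo: "Fmin \<le> \<bar>f1 y\<bar>" unfolding Fmin_def
      by (rule cInf_lower) (use yI in \<open>auto simp: bdd_below_def intro: exI[of _ 0]\<close>)
    have Fmin0: "0 \<le> Fmin" unfolding Fmin_def
      by (rule cInf_greatest) (use yI in auto)
    have z1: "rs - rmax / 2 \<le> z" "rmin / 2 \<le> z" using z(1) by auto
    have z2: "z \<le> rs - rmin / 2" "z \<le> rmax / 2" using z(2) by auto
    have hz1: "max (2 * rs - rmax) rmin \<le> 2 * z" by (rule max.boundedI) (use z1 in linarith)+
    have hz2: "2 * z \<le> min (2 * rs - rmin) rmax" by (rule min.boundedI) (use z2 in linarith)+
    have hz2': "z \<le> min (2 * rs - rmin) rmax / 2" using hz2 by (simp add: field_simps)
    have hz1': "max (2 * rs - rmax) rmin / 2 \<le> z" using hz1 by (simp add: field_simps)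
    have mx0: "0 \<le> max (2 * rs - rmax) rmin / 2"
    proof -
      have "rmin \<le> max (2 * rs - rmax) rmin" by (rule max.cobounded2)
      then show ?thesis using rmin0 by simp
    qed
    have gup: "g z \<le> gmax" unfolding gmax_def by (rule g_mono[OF z0 hz2'])
    have glo: "gmin \<le> g z" unfolding gmin_def by (rule g_mono[OF mx0 hz1'])
    have g1: "1 \<le> g z" using g_ge1 z0 by simp
    have gmin1: "1 \<le> gmin" unfolding gmin_def using g_ge1 mx0 by simp
    have zG: "z \<in> GS" using hz1 hz2 by (simp add: GS_def)
    have GSpos: "0 < g1 w" if "w \<in> GS" for w
    proof -
      have "rmin \<le> 2 * w" using that max.cobounded2[of rmin "2 * rs - rmax"] by (simp add: GS_def)
      then have "0 \<le> w" using rmin0 by simp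
      then show ?thesis using g_inc by simp
    qed
    have Glo: "Gmin \<le> g1 z" unfolding Gmin_def
    proof (rule cInf_lower)
      show "g1 z \<in> g1 ` GS" using zG by simp
      show "bdd_below (g1 ` GS)"
      proof (rule bdd_belowI)
        fix w assume "w \<in> g1 ` GS"
        then obtain s where "s \<in> GS" "w = g1 s" by auto
        then show "0 \<le> w" using GSpos[of s] by simp
      qed
    qed
    have Gmin0: "0 \<le> Gmin" unfolding Gmin_def
    proof (rule cInf_greatest)
      show "g1 ` GS \<noteq> {}" using zG by blast
      fix w assume "w \<in> g1 ` GS"
      then obtain s where "s \<in> GS" "w = g1 s" by auto
      then show "0 \<le> w" using GSpos[of s] by simp
    qed
    have flo: "fmin \<le> f y" unfolding fmin_def by (rule f_mono[OF y0 y(2)])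
    have "0 \<le> min (rs / \<eta>) rmax"
    proof (rule min.boundedI)
      show "0 \<le> rs / \<eta>" using rsb rmin0 eta by simp
      show "0 \<le> rmax" using rsb rmin0 by simp
    qed
    then have fmin0: "0 \<le> fmin" unfolding fmin_def using f_pos by (auto intro: less_imp_le)
    have "- f1 y * g z \<le> Fmax * gmax"
    proof -
      have "0 \<le> Fmax" using Fup abs_ge_zero[of "f1 y"] by linarith
      moreover have "0 \<le> g z" using g1 by linarith
      ultimately have "\<bar>f1 y\<bar> * g z \<le> Fmax * gmax" by (intro mult_mono[OF Fup gup])
      then show ?thesis using af by simp
    qed
    moreover have "Fmin * gmin \<le> - f1 y * g z"
    proof -
      have "0 \<le> gmin" using gmin1 by linarith
      then have "Fmin * gmin \<le> \<bar>f1 y\<bar> * g z" by (intro mult_mono[OF Flo glo abs_ge_zero])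
      then show ?thesis using af by simp
    qed
    moreover have "fmin * Gmin \<le> f y * g1 z"
    proof -
      have "0 < f y" using f_pos y0 by blast
      then show ?thesis by (intro mult_mono[OF flo Glo]) (use Gmin0 in auto)
    qed
    ultimately show ?thesis by (simp add: amax_def amin_def bmin_def)
  qed
  show ?thesis
  proof (intro exI[of _ "2 * \<kappa> * rmin"] conjI allI impI)
    show "0 < 2 * \<kappa> * rmin" using \<kappa>0 rmin0 by simp
    fix \<rho> :: "real \<Rightarrow> real \<Rightarrow> real" and t :: real assume sol: "is_solution \<eta> f g \<rho>0 \<rho>" and t: "0 \<le> t"
    obtain \<rho>t \<rho>x where C1:
      "continuous_on ({0..} \<times> UNIV) (\<lambda>(t,x). \<rho>t t x)"
      "\<forall>t\<ge>0. \<forall>x. ((\<lambda>(s,y). \<rho> s y) has_derivative (\<lambda>(h,k). \<rho>t t x * h + \<rho>x t x * k)) (at (t,x) within ({0..} \<times> UNIV))"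
      using sol unfolding is_solution_def C1_halfplane_def by blast
    have Wt: "\<forall>t\<ge>0. W2inf (\<rho> t) \<and> Per (\<rho> t)" and r00: "\<rho> 0 = \<rho>0"
      and D: "\<forall>t\<ge>0. \<forall>x. \<exists>D. ((\<lambda>s. \<rho> s x) has_real_derivative D) (at t within {0..}) \<and>
                     ((\<lambda>y. \<rho> t y * velocity \<eta> f g \<rho> t y) has_real_derivative (- D)) (at x)"
      using sol unfolding is_solution_def by auto
    define rd where "rd = (\<lambda>t. SOME u'. \<forall>x. (\<rho> t has_real_derivative u' x) (at x))"
    have rdd: "(\<rho> t has_real_derivative rd t x) (at x)" if "0 \<le> t" for t x
    proof -
      have "\<exists>u'. \<forall>x. (\<rho> t has_real_derivative u' x) (at x)"
        using Wt that unfolding W2inf_def by blast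
      from someI_ex[OF this] show ?thesis by (simp add: rd_def)
    qed
    have rtd: "((\<lambda>s. \<rho> s x) has_real_derivative \<rho>t t x) (at t within {0..})" if "0 \<le> t" for t x
      using C1(2) that by (intro rtd_from_C1) auto
    have rcont: "continuous_on ({0..} \<times> UNIV) (\<lambda>(t,x). \<rho> t x)"
      unfolding continuous_on_eq_continuous_within
    proof
      fix p :: "real \<times> real" assume "p \<in> {0..} \<times> UNIV"
      then obtain t x where p: "p = (t, x)" "0 \<le> t" by auto
      show "continuous (at p within {0..} \<times> UNIV) (\<lambda>(t, x). \<rho> t x)"
        using has_derivative_continuous[OF C1(2)[rule_format, OF p(2), of x]] p(1) by simp
    qed
    interpret S: sol \<eta> f f1 g g1 \<rho> \<rho>t rd
    proof
      show "0 < \<eta>" "\<eta> \<le> 1" by (rule eta(1), rule eta(2))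
    next
      show "\<And>y. 0 \<le> y \<Longrightarrow> (f has_real_derivative f1 y) (at y within {0..})" by (rule fd)
      show "\<And>y. 0 \<le> y \<Longrightarrow> (g has_real_derivative g1 y) (at y within {0..})" by (rule gd)
      show "\<And>y. 0 \<le> y \<Longrightarrow> 0 < f y" using f_pos by simp
      show "\<And>y. 0 \<le> y \<Longrightarrow> f1 y < 0" using f_dec by simp
      show "\<And>y. 0 \<le> y \<Longrightarrow> 0 < g1 y" using g_inc by simp
      show "\<And>y. 0 \<le> y \<Longrightarrow> 1 \<le> g y" using g_ge1 by simp
      show "continuous_on ({0..} \<times> UNIV) (\<lambda>(t, x). \<rho> t x)" by (rule rcont)
      show "continuous_on ({0..} \<times> UNIV) (\<lambda>(t, x). \<rho>t t x)" by (rule C1(1))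
      show "\<And>t x. 0 \<le> t \<Longrightarrow> ((\<lambda>s. \<rho> s x) has_real_derivative \<rho>t t x) (at t within {0..})" by (rule rtd)
      show "\<And>t x. 0 \<le> t \<Longrightarrow> (\<rho> t has_real_derivative rd t x) (at x)" by (rule rdd)
      show "\<And>t x. 0 \<le> t \<Longrightarrow> 0 < \<rho> t x" using Wt by (auto simp: Per_def)
      show "\<And>t x. 0 \<le> t \<Longrightarrow> \<rho> t (x + 1) = \<rho> t x" using Wt by (auto simp: Per_def)
      show "\<And>t x. 0 < t \<Longrightarrow> ((\<lambda>y. \<rho> t y * velocity \<eta> f g \<rho> t y) has_real_derivative - \<rho>t t x) (at x)"
      proof -
        fix t x :: real assume tp: "0 < t"
        obtain D0 where D0: "((\<lambda>s. \<rho> s x) has_real_derivative D0) (at t within {0..})"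
          "((\<lambda>y. \<rho> t y * velocity \<eta> f g \<rho> t y) has_real_derivative (- D0)) (at x)"
          using D tp by (meson less_imp_le)
        have a1: "((\<lambda>s. \<rho> s x) has_real_derivative D0) (at t)"
          using D0(1) at_interior_real[OF tp] by simp
        have a2: "((\<lambda>s. \<rho> s x) has_real_derivative \<rho>t t x) (at t)"
          using rtd[of t x] tp at_interior_real[OF tp] by simp
        have "D0 = \<rho>t t x" by (rule DERIV_unique[OF a1 a2])
        then show "((\<lambda>y. \<rho> t y * velocity \<eta> f g \<rho> t y) has_real_derivative - \<rho>t t x) (at x)" using D0(2) by simp
      qed
    qed
    have M0: "S.M 0 = rs" by (simp add: S.M_def r00 rs_def)
    have bnd1: "rmin \<le> \<rho> s x" if "0 \<le> s" for s x
      by (rule S.min_principle[OF _ that]) (simp add: r00 r0b)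
    have bnd2: "\<rho> s x \<le> rmax" if "0 \<le> s" for s x
      by (rule S.max_principle[OF _ that]) (simp add: r00 r0b)
    have dec: "integral {0..1} (\<lambda>x. (\<rho> t x - S.M 0)\<^sup>2)
     \<le> rmax / rmin * exp (- (2 * (bmin - (amax - amin) / (2 * \<eta>)) * rmin) * t)
        * integral {0..1} (\<lambda>x. (\<rho> 0 x - S.M 0)\<^sup>2)"
    proof (rule S.decay[OF rmin0 bnd1 bnd2 _ _ _ _ t])
      show "rmin \<le> S.M 0" "S.M 0 \<le> rmax" using rsb M0 by auto
      show "0 < bmin - (amax - amin) / (2 * \<eta>)" using \<kappa>0 by (simp add: \<kappa>_def)
      fix y z assume "rmin \<le> y" "y \<le> min (S.M 0 / \<eta>) rmax" "max (S.M 0 - rmax / 2) (rmin / 2) \<le> z"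
        "z \<le> min (S.M 0 - rmin / 2) (rmax / 2)"
      then show "- f1 y * g z \<le> amax \<and> amin \<le> - f1 y * g z \<and> bmin \<le> f y * g1 z"
        using cst M0 by simp
    qed
    show "integral {0..1} (\<lambda>x. (\<rho> t x - integral {0..1} \<rho>0)\<^sup>2)
              \<le> Sup (\<rho>0 ` {0..1}) / Inf (\<rho>0 ` {0..1}) * exp (- (2 * \<kappa> * rmin) * t)
                 * integral {0..1} (\<lambda>x. (\<rho>0 x - integral {0..1} \<rho>0)\<^sup>2)"
      using dec by (simp add: M0 r00 rs_def rmin_def rmax_def \<kappa>_def)
  qed
qed


end
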